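(* Let $N=[1,n]=\{1,\dots,n\}$ ($n\ge0$). Then \[ |G_2(N)/{\sim}|=\sum_{[M]\in\mathcal{P}(N)/{\sim}}|\overline{L}_2(|M|)/\mathcal{S}_2| + \sum_{[M]\in\mathcal{P}(N)/{\sim},\ M\notin\mathrm{Sym}}\big(|\overline{t}^{\langle 1\rangle}_{|M|}|+|\overline{t}^{\langle c\rangle}_{|M|}|\big). \]
   Context: Binary CAs: for finite $M=\{j_1<\dots<j_m\}\subset\mathbb{Z}$ and $f:\{0,1\}^m\to\{0,1\}$, $\Phi^M_f(x)_i=f(x_{i+j_1}\dots x_{i+j_m})$ on $\{0,1\}^{\mathbb{Z}}$; $G_2(N)=\{\Phi^N_f\mid f:\{0,1\}^{|N|}\to\{0,1\}\}$. $\overline{L}_2(m)$ is the set of irreducible $f:\{0,1\}^m\to\{0,1\}$ (depending on every argument). On rules: $c$ swaps $0,1$ letterwise, $r$ reverses words, $\hat cf(w)=cf(cw)$, $\hat rf(w)=f(rw)$; $\mathcal{S}_2=\{1,r,c,rc\}$ acts on $\overline{L}_2(m)$, $\mathrm{stab}(f)=\{\alpha\mid\hat\alpha f=f\}$, $\overline{t}^U_m=\{[f]\in\overline{L}_2(m)/\mathcal{S}_2\mid\mathrm{stab}(f)=U\}$. On global maps: $\sigma\Phi=\sigma\circ\Phi$ with $(\sigma x)_i=x_{i+1}$, $\hat c\Phi(x)=c\Phi(cx)$, $\hat r\Phi(x)=r\Phi(rx)$ with $(rx)_i=x_{-i}$; $\Phi\cong\Psi$ iff $\Psi$ is obtained from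 $\Phi$ by an element of the group generated by $\sigma,\hat r,\hat c$. Scaling: for a positive rational $v$ and a global map $\Phi$ admitting a representation $\Phi=\Phi^M_f$ with $vM\subseteq\mathbb{Z}$ (where $vM=\{vi\mid i\in M\}$), $\hat s_v\Phi=\Phi^{vM}_f$ (independent of the representation). $\Phi\sim\Psi$ iff there are global maps $\Phi',\Psi'$ and a positive rational $v$ with $\Phi\cong\Phi'$, $\Psi\cong\Psi'$ and $\Psi'=\hat s_v\Phi'$; $G_2(N)/{\sim}$ is the set of classes of this equivalence relation restricted to $G_2(N)$. For sets of integers: $M\cong M'$ iff $M'=j+M$ or $M'=j-M$ for some $j\in\mathbb{Z}$; $M\sim M'$ iff there are $M'',M'''\subseteq\mathbb{Z}$ and a positive rational $v$ with $M\cong M''$, $M'\cong M'''$, $M'''=vM''$; $\mathcal{P}(N)/{\sim}$ is the set of classes of $\sim$ restricted to subsets of $N$. $\mathrm{Sym}$ is the set of $M$ with $M=j-M$ for some $j\in\mathbb{Z}$. *)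

theory Defs
  imports Main "HOL.Rat"
begin

type_synonym config = "int \<Rightarrow> bool"
type_synonym gmap = "config \<Rightarrow> config"

text \<open>Local rules of arity m: functions on binary words of length m,
  extended by False outside words of length m (so that each rule has a unique
  representative).\<close>
definition rules :: "nat \<Rightarrow> (bool list \<Rightarrow> bool) set" where
  "rules m = {f. \<forall>w. length w \<noteq> m \<longrightarrow> f w = False}"

definition Phi :: "int set \<Rightarrow> (bool list \<Rightarrow> bool) \<Rightarrow> gmap" where
  "Phi M f x i = f (map (\<lambda>j. x (i + j)) (sorted_list_of_set M))"

definition G2 :: "int set \<Rightarrow> gmap set" where
  "G2 N = {Phi N f | f. f \<in> rules (card N)}"

definition irreducible_rule :: "nat \<Rightarrow> (bool list \<Rightarrow> bool) \<Rightarrow> bool" where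
  "irreducible_rule m f \<longleftrightarrow>
     (\<forall>i<m. \<exists>w. length w = m \<and> f w \<noteq> f (w[i := \<not> w ! i]))"

definition Lbar :: "nat \<Rightarrow> (bool list \<Rightarrow> bool) set" where
  "Lbar m = {f \<in> rules m. irreducible_rule m f}"

datatype S2 = S1 | Sr | Sc | Src

definition hat_c_rule :: "nat \<Rightarrow> (bool list \<Rightarrow> bool) \<Rightarrow> (bool list \<Rightarrow> bool)" where
  "hat_c_rule m f w = (length w = m \<and> \<not> f (map Not w))"

definition hat_r_rule :: "nat \<Rightarrow> (bool list \<Rightarrow> bool) \<Rightarrow> (bool list \<Rightarrow> bool)" where
  "hat_r_rule m f w = (length w = m \<and> f (rev w))"

fun act :: "nat \<Rightarrow> S2 \<Rightarrow> (bool list \<Rightarrow> bool) \<Rightarrow> (bool list \<Rightarrow> bool)" where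
  "act m S1 f = f"
| "act m Sr f = hat_r_rule m f"
| "act m Sc f = hat_c_rule m f"
| "act m Src f = hat_r_rule m (hat_c_rule m f)"

definition stab :: "nat \<Rightarrow> (bool list \<Rightarrow> bool) \<Rightarrow> S2 set" where
  "stab m f = {\<alpha>. act m \<alpha> f = f}"

definition orbrel :: "nat \<Rightarrow> ((bool list \<Rightarrow> bool) \<times> (bool list \<Rightarrow> bool)) set" where
  "orbrel m = {(f, g). f \<in> Lbar m \<and> g \<in> Lbar m \<and> (\<exists>\<alpha>. g = act m \<alpha> f)}"

definition tbar :: "nat \<Rightarrow> S2 set \<Rightarrow> (bool list \<Rightarrow> bool) set set" where
  "tbar m U = {orbrel m `` {f} | f. f \<in> Lbar m \<and> stab m f = U}"

definition shift_cfg :: "config \<Rightarrow> config" where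
  "shift_cfg x i = x (i + 1)"

definition c_cfg :: "config \<Rightarrow> config" where
  "c_cfg x i = (\<not> x i)"

definition r_cfg :: "config \<Rightarrow> config" where
  "r_cfg x i = x (- i)"

definition sigma_g :: "gmap \<Rightarrow> gmap" where
  "sigma_g \<Phi> = shift_cfg \<circ> \<Phi>"

definition hat_c_g :: "gmap \<Rightarrow> gmap" where
  "hat_c_g \<Phi> x = c_cfg (\<Phi> (c_cfg x))"

definition hat_r_g :: "gmap \<Rightarrow> gmap" where
  "hat_r_g \<Phi> x = r_cfg (\<Phi> (r_cfg x))"

definition gen_step :: "(gmap \<times> gmap) set" where
  "gen_step = {(\<Phi>, sigma_g \<Phi>) | \<Phi>. True} \<union> {(\<Phi>, hat_r_g \<Phi>) | \<Phi>. True}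
              \<union> {(\<Phi>, hat_c_g \<Phi>) | \<Phi>. True}"

text \<open>Phi \<cong> Psi: Psi is obtained from Phi by an element of the group generated by
  sigma, hat r, hat c (all bijections on global maps), i.e. the equivalence
  closure of the generating steps.\<close>
definition gcong :: "gmap \<Rightarrow> gmap \<Rightarrow> bool" where
  "gcong \<Phi> \<Psi> \<longleftrightarrow> (\<Phi>, \<Psi>) \<in> (gen_step \<union> gen_step\<inverse>)\<^sup>*"

definition smul :: "rat \<Rightarrow> int set \<Rightarrow> int set" where
  "smul v M = {k. \<exists>i\<in>M. of_int k = v * of_int i}"

definition int_scalable :: "rat \<Rightarrow> int set \<Rightarrow> bool" where
  "int_scalable v M \<longleftrightarrow> (\<forall>i\<in>M. v * of_int i \<in> \<int>)"

definition scales :: "rat \<Rightarrow> gmap \<Rightarrow> gmap \<Rightarrow> bool" where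
  "scales v \<Phi> \<Psi> \<longleftrightarrow> (\<exists>M f. finite M \<and> f \<in> rules (card M) \<and> int_scalable v M \<and>
      \<Phi> = Phi M f \<and> \<Psi> = Phi (smul v M) f)"

definition gsim :: "gmap \<Rightarrow> gmap \<Rightarrow> bool" where
  "gsim \<Phi> \<Psi> \<longleftrightarrow> (\<exists>\<Phi>' \<Psi>' v. gcong \<Phi> \<Phi>' \<and> gcong \<Psi> \<Psi>' \<and> v > 0 \<and> scales v \<Phi>' \<Psi>')"

definition gsim_on :: "int set \<Rightarrow> (gmap \<times> gmap) set" where
  "gsim_on N = {(\<Phi>, \<Psi>). \<Phi> \<in> G2 N \<and> \<Psi> \<in> G2 N \<and> gsim \<Phi> \<Psi>}"

definition scong :: "int set \<Rightarrow> int set \<Rightarrow> bool" where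
  "scong M M' \<longleftrightarrow> (\<exists>j. M' = (\<lambda>i. j + i) ` M \<or> M' = (\<lambda>i. j - i) ` M)"

definition ssim :: "int set \<Rightarrow> int set \<Rightarrow> bool" where
  "ssim M M' \<longleftrightarrow> (\<exists>M'' M''' v. v > 0 \<and> scong M M'' \<and> scong M' M''' \<and>
      int_scalable v M'' \<and> M''' = smul v M'')"

definition ssim_on :: "int set \<Rightarrow> (int set \<times> int set) set" where
  "ssim_on N = {(M, M'). M \<subseteq> N \<and> M' \<subseteq> N \<and> ssim M M'}"

definition Sym :: "int set set" where
  "Sym = {M. \<exists>j. M = (\<lambda>i. j - i) ` M}"

definition rep :: "'a set \<Rightarrow> 'a" where
  "rep C = (SOME M. M \<in> C)"

end

theory Submission
  imports Defs Complex_Main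
begin


abbreviation SL :: "int set \<Rightarrow> int list" where "SL M \<equiv> sorted_list_of_set M"

lemma map_of_zip_nth':
  "distinct xs \<Longrightarrow> length xs = length ys \<Longrightarrow> k < length xs \<Longrightarrow> map_of (zip xs ys) (xs!k) = Some (ys!k)"
proof (induction xs arbitrary: ys k)
  case Nil then show ?case by simp
next
  case (Cons a xs)
  then obtain b ys' where ys: "ys = b # ys'" by (cases ys) auto
  show ?case
  proof (cases k)
    case 0 then show ?thesis using ys by simp
  next
    case (Suc k')
    have "xs ! k' \<noteq> a" using Cons.prems Suc by (auto simp: nth_mem)
    then show ?thesis using Cons.IH[of ys' k'] Cons.prems ys Suc by auto
  qed
qed

definition realize :: "int set \<Rightarrow> bool list \<Rightarrow> config" where
  "realize M w j = (case map_of (zip (SL M) w) j of None \<Rightarrow> False | Some b \<Rightarrow> b)"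

lemma realize_nth:
  assumes "finite M" "length w = card M" "k < card M"
  shows "realize M w (SL M ! k) = w ! k"
  using assms map_of_zip_nth'[of "SL M" w k]
  by (simp add: realize_def distinct_sorted_list_of_set length_sorted_list_of_set)

lemma realize_map:
  assumes "finite M" "length w = card M"
  shows "map (realize M w) (SL M) = w"
  by (rule nth_equalityI) (use assms realize_nth in \<open>auto simp: length_sorted_list_of_set\<close>)

lemma realize_in:
  assumes "finite M" "j \<in> M"
  shows "realize M (map x (SL M)) j = x j"
proof -
  have "j \<in> set (SL M)" using assms by simp
  then obtain k where k: "k < length (SL M)" "SL M ! k = j" by (auto simp: in_set_conv_nth)
  then show ?thesis using realize_nth[of M "map x (SL M)" k] assms
    by (auto simp: length_sorted_list_of_set)
qed

lemma Phi_shift: "Phi M f x i = Phi M f (\<lambda>j. x (i + j)) 0"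
  by (simp add: Phi_def)

lemma Phi_local:
  assumes "finite M" "\<And>j. j \<in> M \<Longrightarrow> x j = y j"
  shows "Phi M f x 0 = Phi M f y 0"
proof -
  have "map (\<lambda>j. x (0 + j)) (SL M) = map (\<lambda>j. y (0 + j)) (SL M)"
    by (rule map_cong) (use assms in auto)
  then show ?thesis by (simp only: Phi_def)
qed

definition ess :: "gmap \<Rightarrow> int set" where
  "ess \<Phi> = {j. \<exists>x. \<Phi> x 0 \<noteq> \<Phi> (x(j := \<not> x j)) 0}"

lemma ess_sub: "finite M \<Longrightarrow> ess (Phi M f) \<subseteq> M"
proof
  fix j assume M: "finite M" and "j \<in> ess (Phi M f)"
  then obtain x where x: "Phi M f x 0 \<noteq> Phi M f (x(j := \<not> x j)) 0" by (auto simp: ess_def)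
  show "j \<in> M"
  proof (rule ccontr)
    assume "j \<notin> M"
    then have "Phi M f x 0 = Phi M f (x(j := \<not> x j)) 0" by (intro Phi_local[OF M]) auto
    with x show False by simp
  qed
qed

lemma map_upd_nth:
  assumes "distinct L" "k < length L"
  shows "map (x(L!k := v)) L = (map x L)[k := v]"
  by (rule nth_equalityI) (use assms in \<open>auto simp: nth_list_update nth_eq_iff_index_eq\<close>)

lemma ess_agree:
  assumes M: "finite M" and agr: "\<And>j. j \<in> ess (Phi M f) \<Longrightarrow> x j = y j"
  shows "Phi M f x 0 = Phi M f y 0"
proof -
  have main: "finite D \<Longrightarrow> (\<forall>x y. (\<forall>j\<in>M. j \<notin> D \<longrightarrow> x j = y j) \<longrightarrow> D \<inter> ess (Phi M f) = {}
     \<longrightarrow> Phi M f x 0 = Phi M f y 0)" for D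
  proof (induction D rule: finite_induct)
    case empty
    show ?case
    proof (intro allI impI)
      fix x y :: config assume "\<forall>j\<in>M. j \<notin> {} \<longrightarrow> x j = y j"
      then show "Phi M f x 0 = Phi M f y 0" by (intro Phi_local[OF M]) blast
    qed
  next
    case (insert d D)
    show ?case
    proof (intro allI impI)
      fix x y :: config
      assume a1: "\<forall>j\<in>M. j \<notin> insert d D \<longrightarrow> x j = y j" and a2: "insert d D \<inter> ess (Phi M f) = {}"
      define z where "z = x(d := y d)"
      have "\<forall>j\<in>M. j \<notin> D \<longrightarrow> z j = y j" using a1 by (simp add: z_def)
      moreover have "D \<inter> ess (Phi M f) = {}" using a2 by blast
      ultimately have zy: "Phi M f z 0 = Phi M f y 0" using insert.IH by blast
      have "Phi M f x 0 = Phi M f z 0"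
      proof (cases "x d = y d")
        case True then have "z = x" unfolding z_def by (simp only: True[symmetric] fun_upd_triv)
        then show ?thesis by simp
      next
        case False
        then have zz: "z = x(d := \<not> x d)" by (auto simp: z_def)
        have "d \<notin> ess (Phi M f)" using a2 by blast
        then show ?thesis unfolding zz ess_def by blast
      qed
      with zy show "Phi M f x 0 = Phi M f y 0" by simp
    qed
  qed
  have "finite (M - ess (Phi M f))" using M by simp
  from main[OF this] agr show ?thesis by blast
qed



lemma Phi0: "Phi M g x 0 = g (map x (SL M))"
  by (simp add: Phi_def)

lemma SL_nth_in: "finite M \<Longrightarrow> k < card M \<Longrightarrow> SL M ! k \<in> M"
  by (metis length_sorted_list_of_set nth_mem set_sorted_list_of_set)

lemma ess_irred:
  assumes M: "finite M" and g: "g \<in> Lbar (card M)"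
  shows "ess (Phi M g) = M"
proof
  show "ess (Phi M g) \<subseteq> M" using ess_sub[OF M] .
  show "M \<subseteq> ess (Phi M g)"
  proof
    fix j assume "j \<in> M"
    then have "j \<in> set (SL M)" using M by simp
    then obtain k where k: "k < card M" "SL M ! k = j"
      using M unfolding in_set_conv_nth by (metis length_sorted_list_of_set)
    from g k obtain w where w: "length w = card M" "g w \<noteq> g (w[k := \<not> w ! k])"
      by (auto simp: Lbar_def irreducible_rule_def)
    define x where "x = realize M w"
    have mx: "map x (SL M) = w" using realize_map[OF M w(1)] by (simp add: x_def)
    have xj: "x j = w ! k" using realize_nth[OF M w(1) k(1)] k by (simp add: x_def)
    have "map (x(j := \<not> x j)) (SL M) = (map x (SL M))[k := \<not> x j]"
      using map_upd_nth[of "SL M" k x] k M by (simp add: distinct_sorted_list_of_set length_sorted_list_of_set)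
    then have "Phi M g (x(j := \<not> x j)) 0 = g (w[k := \<not> w ! k])" by (simp add: Phi0 mx xj)
    moreover have "Phi M g x 0 = g w" by (simp add: Phi0 mx)
    ultimately show "j \<in> ess (Phi M g)" using w(2) unfolding ess_def by auto
  qed
qed

lemma rule_unique:
  assumes M: "finite M" and g: "g \<in> rules (card M)" and g': "g' \<in> rules (card M)"
    and eq: "Phi M g = Phi M g'"
  shows "g = g'"
proof
  fix w :: "bool list"
  show "g w = g' w"
  proof (cases "length w = card M")
    case True
    have "g w = Phi M g (realize M w) 0" by (simp add: Phi0 realize_map[OF M True])
    also have "\<dots> = Phi M g' (realize M w) 0" by (simp add: eq)
    also have "\<dots> = g' w" by (simp add: Phi0 realize_map[OF M True])
    finally show ?thesis .
  next
    case False then show ?thesis using g g' by (simp add: rules_def)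
  qed
qed

lemma Phi_unique:
  assumes "finite M" "finite M'" "g \<in> Lbar (card M)" "g' \<in> Lbar (card M')"
    and eq: "Phi M g = Phi M' g'"
  shows "M = M' \<and> g = g'"
proof -
  have "M = M'" using ess_irred[OF assms(1,3)] ess_irred[OF assms(2,4)] eq by simp
  then show ?thesis using rule_unique[of M g g'] assms by (auto simp: Lbar_def)
qed

definition redrule :: "int set \<Rightarrow> (bool list \<Rightarrow> bool) \<Rightarrow> (bool list \<Rightarrow> bool)" where
  "redrule M f = (\<lambda>w. length w = card (ess (Phi M f)) \<and> Phi M f (realize (ess (Phi M f)) w) 0)"

lemma reduce:
  assumes M: "finite M"
  shows "redrule M f \<in> Lbar (card (ess (Phi M f)))" and "Phi M f = Phi (ess (Phi M f)) (redrule M f)"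
proof -
  let ?E = "ess (Phi M f)"
  let ?g = "redrule M f"
  have E: "finite ?E" using ess_sub[OF M] M finite_subset by blast
  have key: "?g (map x (SL ?E)) = Phi M f x 0" for x
  proof -
    have "?g (map x (SL ?E)) = Phi M f (realize ?E (map x (SL ?E))) 0"
      by (simp add: redrule_def length_sorted_list_of_set)
    also have "\<dots> = Phi M f x 0"
      by (rule ess_agree[OF M]) (simp add: realize_in[OF E])
    finally show ?thesis .
  qed
  show "Phi M f = Phi ?E ?g"
  proof (intro ext)
    fix x i
    have "Phi ?E ?g x i = ?g (map (\<lambda>j. x (i + j)) (SL ?E))" by (simp add: Phi_def)
    also have "\<dots> = Phi M f (\<lambda>j. x (i + j)) 0" by (rule key)
    also have "\<dots> = Phi M f x i" by (simp add: Phi_shift[symmetric])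
    finally show "Phi M f x i = Phi ?E ?g x i" by simp
  qed
  show "?g \<in> Lbar (card ?E)"
    unfolding Lbar_def irreducible_rule_def
  proof (intro CollectI conjI allI impI)
    show "?g \<in> rules (card ?E)" by (simp add: rules_def redrule_def)
    fix k assume k: "k < card ?E"
    define j where "j = SL ?E ! k"
    have "j \<in> ?E" using SL_nth_in[OF E k] by (simp add: j_def)
    then obtain x where x: "Phi M f x 0 \<noteq> Phi M f (x(j := \<not> x j)) 0" by (auto simp: ess_def)
    define w where "w = map x (SL ?E)"
    have wk: "w ! k = x j" using k by (simp add: w_def j_def length_sorted_list_of_set)
    have "map (x(j := \<not> x j)) (SL ?E) = w[k := \<not> w ! k]"
      using map_upd_nth[of "SL ?E" k x] k E
      by (simp add: distinct_sorted_list_of_set length_sorted_list_of_set w_def wk j_def)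
    then have "?g (w[k := \<not> w ! k]) = Phi M f (x(j := \<not> x j)) 0" using key by metis
    moreover have "?g w = Phi M f x 0" using key by (simp add: w_def)
    moreover have "length w = card ?E" by (simp add: w_def length_sorted_list_of_set)
    ultimately show "\<exists>w. length w = card ?E \<and> ?g w \<noteq> ?g (w[k := \<not> w ! k])" using x by metis
  qed
qed



abbreviation hc where "hc \<equiv> hat_c_rule"
abbreviation hr where "hr \<equiv> hat_r_rule"

lemma hc_rules: "hc m f \<in> rules m" by (simp add: rules_def hat_c_rule_def)
lemma hr_rules: "hr m f \<in> rules m" by (simp add: rules_def hat_r_rule_def)

lemma hc_hc: "f \<in> rules m \<Longrightarrow> hc m (hc m f) = f"
  by (auto simp: rules_def hat_c_rule_def fun_eq_iff comp_def)
lemma hr_hr: "f \<in> rules m \<Longrightarrow> hr m (hr m f) = f"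
  by (auto simp: rules_def hat_r_rule_def fun_eq_iff)
lemma hc_hr: "hc m (hr m f) = hr m (hc m f)"
  by (auto simp: hat_r_rule_def hat_c_rule_def fun_eq_iff rev_map)

lemma hc_Lbar: assumes "f \<in> Lbar m" shows "hc m f \<in> Lbar m"
  unfolding Lbar_def irreducible_rule_def
proof (intro CollectI conjI allI impI)
  show "hc m f \<in> rules m" by (rule hc_rules)
  fix i assume i: "i < m"
  from assms i obtain w where w: "length w = m" "f w \<noteq> f (w[i := \<not> w ! i])"
    by (auto simp: Lbar_def irreducible_rule_def)
  have e: "map Not ((map Not w)[i := \<not> (map Not w) ! i]) = w[i := \<not> w ! i]"
    using i w(1) by (simp add: map_update comp_def)
  show "\<exists>w. length w = m \<and> hc m f w \<noteq> hc m f (w[i := \<not> w ! i])"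
    by (rule exI[of _ "map Not w"]) (use w e in \<open>simp add: hat_c_rule_def comp_def\<close>)
qed

lemma hr_Lbar: assumes "f \<in> Lbar m" shows "hr m f \<in> Lbar m"
  unfolding Lbar_def irreducible_rule_def
proof (intro CollectI conjI allI impI)
  show "hr m f \<in> rules m" by (rule hr_rules)
  fix i assume i: "i < m"
  then have i': "m - i - 1 < m" by simp
  from assms i' obtain w where w: "length w = m" "f w \<noteq> f (w[m - i - 1 := \<not> w ! (m - i - 1)])"
    by (auto simp: Lbar_def irreducible_rule_def)
  have e: "rev ((rev w)[i := \<not> (rev w) ! i]) = w[m - i - 1 := \<not> w ! (m - i - 1)]"
  proof -
    have r: "rev w ! i = w ! (m - i - 1)" using i w(1) by (simp add: rev_nth)
    have "rev ((rev w)[i := \<not> (rev w) ! i]) = (rev (rev w))[m - i - 1 := \<not> (rev w) ! i]"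
      using rev_update[of i "rev w"] i w(1) by simp
    then show ?thesis by (simp only: r rev_rev_ident)
  qed
  show "\<exists>w. length w = m \<and> hr m f w \<noteq> hr m f (w[i := \<not> w ! i])"
    by (rule exI[of _ "rev w"]) (use w e in \<open>simp add: hat_r_rule_def\<close>)
qed

lemma act_Lbar: "f \<in> Lbar m \<Longrightarrow> act m \<alpha> f \<in> Lbar m"
  by (cases \<alpha>) (auto intro: hc_Lbar hr_Lbar)

lemma act_rules: "f \<in> rules m \<Longrightarrow> act m \<alpha> f \<in> rules m"
  by (cases \<alpha>) (auto intro: hc_rules hr_rules)

lemma act_comm: "f \<in> rules m \<Longrightarrow> act m \<alpha> (act m \<beta> f) = act m \<beta> (act m \<alpha> f)"
  by (cases \<alpha>; cases \<beta>) (simp_all add: hc_hr hc_hc hr_hr hc_rules hr_rules)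

lemma act_inv: "f \<in> rules m \<Longrightarrow> act m \<alpha> (act m \<alpha> f) = f"
  by (cases \<alpha>) (simp_all add: hc_hr hc_hc hr_hr hc_rules hr_rules)

lemma act_comp: "f \<in> rules m \<Longrightarrow> \<exists>\<gamma>. act m \<alpha> (act m \<beta> f) = act m \<gamma> f"
proof (cases \<alpha>; cases \<beta>)
qed (simp_all add: hc_hr hc_hc hr_hr hc_rules hr_rules,
     (metis act.simps)+)

lemma stab_act: assumes "f \<in> rules m" shows "stab m (act m \<alpha> f) = stab m f"
proof -
  have "act m \<beta> (act m \<alpha> f) = act m \<alpha> f \<longleftrightarrow> act m \<beta> f = f" for \<beta>
  proof
    assume "act m \<beta> (act m \<alpha> f) = act m \<alpha> f"
    then have "act m \<alpha> (act m \<beta> (act m \<alpha> f)) = act m \<alpha> (act m \<alpha> f)" by simp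
    then show "act m \<beta> f = f" using act_comm[OF assms, of \<alpha> \<beta>] act_inv act_rules assms by metis
  next
    assume "act m \<beta> f = f"
    then show "act m \<beta> (act m \<alpha> f) = act m \<alpha> f" using act_comm[OF assms, of \<alpha> \<beta>] by simp
  qed
  then show ?thesis by (auto simp: stab_def)
qed



definition affimg :: "rat \<Rightarrow> rat \<Rightarrow> int set \<Rightarrow> int set" where
  "affimg s t M = {i. \<exists>j\<in>M. of_int i = s * of_int j + t}"

definition intmap :: "rat \<Rightarrow> rat \<Rightarrow> int set \<Rightarrow> bool" where
  "intmap s t M \<longleftrightarrow> (\<forall>j\<in>M. s * of_int j + t \<in> \<int>)"

definition ef :: "rat \<Rightarrow> rat \<Rightarrow> int \<Rightarrow> int" where
  "ef s t j = \<lfloor>s * of_int j + t\<rfloor>"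

definition ARp :: "int set \<Rightarrow> int set \<Rightarrow> rat \<Rightarrow> rat \<Rightarrow> bool" where
  "ARp M M' s t \<longleftrightarrow> s \<noteq> 0 \<and> intmap s t M \<and> M' = affimg s t M"

lemma of_int_ef: "intmap s t M \<Longrightarrow> j \<in> M \<Longrightarrow> of_int (ef s t j) = s * of_int j + t"
  by (simp add: intmap_def ef_def)

lemma affimg_eq: assumes "intmap s t M" shows "affimg s t M = ef s t ` M"
proof
  show "affimg s t M \<subseteq> ef s t ` M"
  proof
    fix i assume "i \<in> affimg s t M"
    then obtain j where j: "j \<in> M" "of_int i = s * of_int j + t" by (auto simp: affimg_def)
    then have "i = ef s t j" by (simp add: ef_def flip: j(2))
    with j show "i \<in> ef s t ` M" by auto
  qed
  show "ef s t ` M \<subseteq> affimg s t M"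
    using of_int_ef[OF assms] by (auto simp: affimg_def)
qed

lemma ef_strict:
  assumes "intmap s t M" "j \<in> M" "j' \<in> M" "s > 0" "j < j'"
  shows "ef s t j < ef s t j'"
proof -
  have "s * of_int j + t < s * of_int j' + t" using assms(4,5) by simp
  then have "(of_int (ef s t j) :: rat) < of_int (ef s t j')" using of_int_ef[OF assms(1)] assms(2,3) by simp
  then show ?thesis by linarith
qed

lemma ef_strict_neg:
  assumes "intmap s t M" "j \<in> M" "j' \<in> M" "s < 0" "j < j'"
  shows "ef s t j' < ef s t j"
proof -
  have "s * of_int j' + t < s * of_int j + t" using assms(4,5) by simp
  then have "(of_int (ef s t j') :: rat) < of_int (ef s t j)" using of_int_ef[OF assms(1)] assms(2,3) by simp
  then show ?thesis by linarith
qed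

lemma ef_inj: assumes "intmap s t M" "s \<noteq> 0" shows "inj_on (ef s t) M"
proof
  fix j j' assume "j \<in> M" "j' \<in> M" "ef s t j = ef s t j'"
  then have "s * of_int j + t = s * of_int j' + t" using of_int_ef[OF assms(1)] by metis
  then show "j = j'" using assms(2) by simp
qed

lemma card_affimg: "intmap s t M \<Longrightarrow> s \<noteq> 0 \<Longrightarrow> card (affimg s t M) = card M"
  by (simp add: affimg_eq card_image ef_inj)

lemma finite_affimg: "intmap s t M \<Longrightarrow> finite M \<Longrightarrow> finite (affimg s t M)"
  by (simp add: affimg_eq)

lemma smul_eq: "smul v M = affimg v 0 M"
  by (simp add: smul_def affimg_def)

lemma int_scalable_eq: "int_scalable v M = intmap v 0 M"
  by (simp add: int_scalable_def intmap_def)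

lemma oi_add: "((of_int i::rat) = of_int a + of_int b) = (i = a + b)"
  by (metis of_int_add of_int_eq_iff)
lemma oi_diff: "((of_int i::rat) = of_int a - of_int b) = (i = a - b)"
  by (metis of_int_diff of_int_eq_iff)

lemma trans_eq: "(\<lambda>i. j + i) ` M = affimg 1 (of_int j) M"
  by (auto simp: affimg_def add.commute oi_add)

lemma refl_eq: "(\<lambda>i. j - i) ` M = affimg (-1) (of_int j) M"
  by (auto simp: affimg_def oi_diff)

lemma intmap_int: "s \<in> \<int> \<Longrightarrow> t \<in> \<int> \<Longrightarrow> intmap s t M"
  by (auto simp: intmap_def)

lemma affimg_comp:
  assumes "intmap s t M"
  shows "affimg s' t' (affimg s t M) = affimg (s' * s) (s' * t + t') M"
proof
  show "affimg s' t' (affimg s t M) \<subseteq> affimg (s' * s) (s' * t + t') M"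
    by (auto simp: affimg_def algebra_simps)
  show "affimg (s' * s) (s' * t + t') M \<subseteq> affimg s' t' (affimg s t M)"
  proof
    fix i assume "i \<in> affimg (s' * s) (s' * t + t') M"
    then obtain j where j: "j \<in> M" "of_int i = s' * s * of_int j + (s' * t + t')" by (auto simp: affimg_def)
    have "ef s t j \<in> affimg s t M" using j(1) affimg_eq[OF assms] by auto
    moreover have "of_int i = s' * of_int (ef s t j) + t'"
      using j of_int_ef[OF assms j(1)] by (simp add: algebra_simps)
    ultimately show "i \<in> affimg s' t' (affimg s t M)" by (auto simp: affimg_def)
  qed
qed

lemma intmap_comp:
  assumes "intmap s t M"
  shows "intmap s' t' (affimg s t M) \<longleftrightarrow> intmap (s' * s) (s' * t + t') M"
proof -
  have "s' * of_int (ef s t j) + t' = s' * s * of_int j + (s' * t + t')" if "j \<in> M" for j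
    using of_int_ef[OF assms that] by (simp add: algebra_simps)
  then show ?thesis using affimg_eq[OF assms] by (auto simp: intmap_def add.assoc)
qed

lemma ARp_refl: "ARp M M 1 0"
  by (auto simp: ARp_def intmap_def affimg_def)

lemma ARp_trans:
  assumes "ARp M M' s t" "ARp M' M'' s' t'"
  shows "ARp M M'' (s' * s) (s' * t + t')"
  using assms affimg_comp[of s t M s' t'] intmap_comp[of s t M s' t'] by (auto simp: ARp_def)

lemma ARp_sym:
  assumes "ARp M M' s t"
  shows "ARp M' M (1 / s) (- t / s)"
proof -
  have s: "s \<noteq> 0" and im: "intmap s t M" and M': "M' = affimg s t M" using assms by (auto simp: ARp_def)
  have im': "intmap (1/s * s) (1/s * t + - t / s) M"
    by (auto simp: intmap_def s)
  have "affimg (1/s) (- t / s) M' = affimg (1/s * s) (1/s * t + - t / s) M"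
    using affimg_comp[OF im] M' by simp
  also have "\<dots> = M" using s by (simp add: affimg_def)
  finally show ?thesis using s im' intmap_comp[OF im] M' by (simp add: ARp_def)
qed

lemma ARp_card: "ARp M M' s t \<Longrightarrow> card M' = card M"
  by (simp add: ARp_def card_affimg)

lemma ARp_finite: "ARp M M' s t \<Longrightarrow> finite M \<Longrightarrow> finite M'"
  by (simp add: ARp_def finite_affimg)

lemma SL_affimg_pos:
  assumes M: "finite M" and im: "intmap s t M" and s: "s > 0"
  shows "SL (affimg s t M) = map (ef s t) (SL M)"
proof -
  have fin: "finite (affimg s t M)" using finite_affimg[OF im M] .
  have "sorted_wrt (<) (map (ef s t) (SL M))"
    unfolding sorted_wrt_map
    by (rule sorted_wrt_mono_rel[OF _ strict_sorted_list_of_set])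
       (use M ef_strict[OF im _ _ s] in auto)
  moreover have "set (map (ef s t) (SL M)) = affimg s t M" using M affimg_eq[OF im] by simp
  moreover have "length (map (ef s t) (SL M)) = card (affimg s t M)"
    using card_affimg[OF im] s by (simp add: length_sorted_list_of_set)
  ultimately show ?thesis using sorted_list_of_set_unique[OF fin] by blast
qed

lemma SL_affimg_neg:
  assumes M: "finite M" and im: "intmap s t M" and s: "s < 0"
  shows "SL (affimg s t M) = rev (map (ef s t) (SL M))"
proof -
  have fin: "finite (affimg s t M)" using finite_affimg[OF im M] .
  have "sorted_wrt (<) (rev (map (ef s t) (SL M)))"
    unfolding sorted_wrt_rev sorted_wrt_map
    by (rule sorted_wrt_mono_rel[OF _ strict_sorted_list_of_set])
       (use M ef_strict_neg[OF im _ _ s] in auto)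
  moreover have "set (rev (map (ef s t) (SL M))) = affimg s t M" using M affimg_eq[OF im] by simp
  moreover have "length (rev (map (ef s t) (SL M))) = card (affimg s t M)"
    using card_affimg[OF im] s by (simp add: length_sorted_list_of_set)
  ultimately show ?thesis using sorted_list_of_set_unique[OF fin] by blast
qed

lemma PhiAff:
  assumes M: "finite M" and im: "intmap s t M" and s: "s \<noteq> 0" and h: "h \<in> rules (card M)"
  shows "Phi (affimg s t M) (if s > 0 then h else hr (card M) h) x i = Phi M h (\<lambda>j. x (i + ef s t j)) 0"
proof (cases "s > 0")
  case True
  then show ?thesis by (simp add: Phi_def SL_affimg_pos[OF M im True] comp_def)
next
  case False
  then have s': "s < 0" using s by simp
  show ?thesis using False
    by (simp add: Phi_def SL_affimg_neg[OF M im s'] comp_def hat_r_rule_def rev_map[symmetric]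
        length_sorted_list_of_set)
qed



definition Tk :: "int \<Rightarrow> bool \<Rightarrow> bool \<Rightarrow> gmap \<Rightarrow> gmap" where
  "Tk k a b \<Phi> = (\<lambda>x i. b \<noteq> \<Phi> (\<lambda>j. b \<noteq> x (if a then - j else j)) (if a then - (i + k) else i + k))"

lemma Tk0: "Tk 0 False False \<Phi> = \<Phi>"
  by (simp add: Tk_def)

lemma sigma_Tk: "sigma_g (Tk k a b \<Phi>) = Tk (k + 1) a b \<Phi>"
  by (auto simp: fun_eq_iff sigma_g_def shift_cfg_def Tk_def algebra_simps)

lemma hatc_Tk: "hat_c_g (Tk k a b \<Phi>) = Tk k a (\<not> b) \<Phi>"
  by (auto simp: fun_eq_iff hat_c_g_def c_cfg_def Tk_def)

lemma hatr_Tk: "hat_r_g (Tk k a b \<Phi>) = Tk (- k) (\<not> a) b \<Phi>"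
  by (auto simp: fun_eq_iff hat_r_g_def r_cfg_def Tk_def algebra_simps)

lemma sigma_inv: "sigma_g \<Psi> = Tk k a b \<Phi> \<Longrightarrow> \<Psi> = Tk (k - 1) a b \<Phi>"
proof -
  assume h: "sigma_g \<Psi> = Tk k a b \<Phi>"
  have "sigma_g \<Psi> = sigma_g (Tk (k - 1) a b \<Phi>)" using h sigma_Tk[of "k - 1" a b \<Phi>] by simp
  then have h2: "\<Psi> x (i + 1) = Tk (k - 1) a b \<Phi> x (i + 1)" for x i
    by (simp add: sigma_g_def shift_cfg_def fun_eq_iff)
  have "\<Psi> x i = Tk (k - 1) a b \<Phi> x i" for x i
    using h2[of x "i - 1"] by simp
  then show ?thesis by (simp add: fun_eq_iff)
qed

lemma cc_cfg: "c_cfg (c_cfg x) = x" by (simp add: fun_eq_iff c_cfg_def)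
lemma rr_cfg: "r_cfg (r_cfg x) = x" by (simp add: fun_eq_iff r_cfg_def)

lemma hatc_hatc: "hat_c_g (hat_c_g \<Psi>) = \<Psi>"
  by (simp add: fun_eq_iff hat_c_g_def cc_cfg c_cfg_def)

lemma hatr_hatr: "hat_r_g (hat_r_g \<Psi>) = \<Psi>"
  by (simp add: fun_eq_iff hat_r_g_def rr_cfg r_cfg_def)

lemma gs1: "(\<Psi>, sigma_g \<Psi>) \<in> gen_step" by (auto simp: gen_step_def)
lemma gs2: "(\<Psi>, hat_r_g \<Psi>) \<in> gen_step" by (auto simp: gen_step_def)
lemma gs3: "(\<Psi>, hat_c_g \<Psi>) \<in> gen_step" by (auto simp: gen_step_def)

lemma gcong_Tk: assumes "gcong \<Phi> \<Psi>" shows "\<exists>k a b. \<Psi> = Tk k a b \<Phi>"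
proof -
  have "(\<Phi>, \<Psi>) \<in> (gen_step \<union> gen_step\<inverse>)\<^sup>*" using assms by (simp add: gcong_def)
  then show ?thesis
  proof (induction rule: rtrancl_induct)
    case base
    have "\<Phi> = Tk 0 False False \<Phi>" by (simp add: Tk0)
    then show ?case by blast
  next
    case (step y z)
    from step.IH obtain k a b where y: "y = Tk k a b \<Phi>" by blast
    from step.hyps(2) show ?case
    proof
      assume "(y, z) \<in> gen_step"
      then have "z = sigma_g y \<or> z = hat_r_g y \<or> z = hat_c_g y" by (auto simp: gen_step_def)
      then show ?thesis
      proof (elim disjE)
        assume "z = sigma_g y" then have "z = Tk (k + 1) a b \<Phi>" by (simp add: y sigma_Tk)
        then show ?thesis by blast
      next
        assume "z = hat_r_g y" then have "z = Tk (- k) (\<not> a) b \<Phi>" by (simp add: y hatr_Tk)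
        then show ?thesis by blast
      next
        assume "z = hat_c_g y" then have "z = Tk k a (\<not> b) \<Phi>" by (simp add: y hatc_Tk)
        then show ?thesis by blast
      qed
    next
      assume "(y, z) \<in> gen_step\<inverse>"
      then have "y = sigma_g z \<or> y = hat_r_g z \<or> y = hat_c_g z" by (auto simp: gen_step_def)
      then show ?thesis
      proof (elim disjE)
        assume "y = sigma_g z" then have "z = Tk (k - 1) a b \<Phi>" using y sigma_inv by simp
        then show ?thesis by blast
      next
        assume "y = hat_r_g z" then have "z = hat_r_g y" by (simp add: hatr_hatr)
        then have "z = Tk (- k) (\<not> a) b \<Phi>" by (simp add: y hatr_Tk)
        then show ?thesis by blast
      next
        assume "y = hat_c_g z" then have "z = hat_c_g y" by (simp add: hatc_hatc)
        then have "z = Tk k a (\<not> b) \<Phi>" by (simp add: y hatc_Tk)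
        then show ?thesis by blast
      qed
    qed
  qed
qed

lemma Tk_gcong: "gcong \<Phi> (Tk k a b \<Phi>)"
proof -
  let ?R = "(gen_step \<union> gen_step\<inverse>)\<^sup>*"
  have shift: "(\<Phi>, Tk k False False \<Phi>) \<in> ?R" for k
  proof (induction k rule: int_induct[where k = 0])
    case base
    then show ?case by (simp add: Tk0)
  next
    case (step1 i)
    have "(Tk i False False \<Phi>, Tk (i + 1) False False \<Phi>) \<in> gen_step"
      using gs1[of "Tk i False False \<Phi>"] by (simp add: sigma_Tk)
    then have "(Tk i False False \<Phi>, Tk (i + 1) False False \<Phi>) \<in> gen_step \<union> gen_step\<inverse>" by blast
    with step1(2) show ?case by (rule rtrancl.rtrancl_into_rtrancl)
  next
    case (step2 i)
    have "(Tk (i - 1) False False \<Phi>, Tk i False False \<Phi>) \<in> gen_step"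
      using gs1[of "Tk (i - 1) False False \<Phi>"] by (simp add: sigma_Tk)
    then have "(Tk i False False \<Phi>, Tk (i - 1) False False \<Phi>) \<in> gen_step \<union> gen_step\<inverse>" by blast
    with step2(2) show ?case by (rule rtrancl.rtrancl_into_rtrancl)
  qed
  have c: "(\<Phi>, Tk k False b \<Phi>) \<in> ?R" for k b
  proof (cases b)
    case True
    have "(Tk k False False \<Phi>, Tk k False True \<Phi>) \<in> gen_step"
      using gs3[of "Tk k False False \<Phi>"] by (simp add: hatc_Tk)
    then have "(Tk k False False \<Phi>, Tk k False True \<Phi>) \<in> gen_step \<union> gen_step\<inverse>" by blast
    with shift[of k] have "(\<Phi>, Tk k False True \<Phi>) \<in> ?R" by (rule rtrancl.rtrancl_into_rtrancl)
    then show ?thesis using True by simp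
  next
    case False then show ?thesis using shift by simp
  qed
  show ?thesis
  proof (cases a)
    case True
    have "(Tk (- k) False b \<Phi>, Tk k True b \<Phi>) \<in> gen_step"
      using gs2[of "Tk (- k) False b \<Phi>"] by (simp add: hatr_Tk)
    then have "(Tk (- k) False b \<Phi>, Tk k True b \<Phi>) \<in> gen_step \<union> gen_step\<inverse>" by blast
    with c[of "- k" b] have "(\<Phi>, Tk k True b \<Phi>) \<in> ?R" by (rule rtrancl.rtrancl_into_rtrancl)
    then show ?thesis using True by (simp add: gcong_def)
  next
    case False then show ?thesis using c by (simp add: gcong_def)
  qed
qed

lemma gcong_iff: "gcong \<Phi> \<Psi> \<longleftrightarrow> (\<exists>k a b. \<Psi> = Tk k a b \<Phi>)"
  using gcong_Tk Tk_gcong by blast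

definition sg :: "bool \<Rightarrow> rat" where "sg a = (if a then -1 else 1)"
definition opr :: "nat \<Rightarrow> bool \<Rightarrow> (bool list \<Rightarrow> bool) \<Rightarrow> (bool list \<Rightarrow> bool)" where
  "opr m a h = (if a then hr m h else h)"
definition opc :: "nat \<Rightarrow> bool \<Rightarrow> (bool list \<Rightarrow> bool) \<Rightarrow> (bool list \<Rightarrow> bool)" where
  "opc m b h = (if b then hc m h else h)"

lemma intmap_sg: "intmap (sg a) (of_int k) M"
  by (simp add: intmap_int sg_def)

lemma ef_sg: "ef (sg a) (of_int k) j = (if a then k - j else k + j)"
proof -
  have "sg a * of_int j + of_int k = (of_int (if a then k - j else k + j) :: rat)"
    by (simp add: sg_def)
  then show ?thesis by (simp only: ef_def floor_of_int)
qed

lemma Phi_Tk: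
  assumes M: "finite M" and g: "g \<in> rules (card M)"
  shows "Tk k a b (Phi M g) = Phi (affimg (sg a) (of_int k) M) (opr (card M) a (opc (card M) b g))"
proof (intro ext)
  fix x i
  let ?h = "opc (card M) b g"
  have h: "?h \<in> rules (card M)" using g hc_rules by (simp add: opc_def)
  have s: "sg a \<noteq> 0" by (simp add: sg_def)
  have e: "(if sg a > 0 then ?h else hr (card M) ?h) = opr (card M) a ?h" by (simp add: sg_def opr_def)
  have "Phi (affimg (sg a) (of_int k) M) (opr (card M) a ?h) x i = Phi M ?h (\<lambda>j. x (i + ef (sg a) (of_int k) j)) 0"
    using PhiAff[OF M intmap_sg s h, where x=x and i=i] e by simp
  also have "\<dots> = Tk k a b (Phi M g) x i"
    by (cases a; cases b) (simp_all add: Tk_def Phi_def opc_def hat_c_rule_def ef_sg comp_def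
        length_sorted_list_of_set algebra_simps)
  finally show "Tk k a b (Phi M g) x i = Phi (affimg (sg a) (of_int k) M) (opr (card M) a ?h) x i" by simp
qed



definition opset :: "nat \<Rightarrow> rat \<Rightarrow> (bool list \<Rightarrow> bool) \<Rightarrow> (bool list \<Rightarrow> bool) set" where
  "opset m s g = (if s > 0 then {g, hc m g} else {hr m g, hr m (hc m g)})"

lemma sg_pos: "sg (s < 0) * s = \<bar>s\<bar>" by (simp add: sg_def)

lemma core:
  assumes ar: "ARp M M' s t"
  shows "\<exists>m0 k. \<bar>s\<bar> > 0 \<and> intmap \<bar>s\<bar> 0 (affimg 1 (of_int (- m0)) M) \<and>
     affimg \<bar>s\<bar> 0 (affimg 1 (of_int (- m0)) M) = affimg (sg (s < 0)) (of_int k) M'"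
proof -
  obtain t0 m0 where ar0: "ARp M M' s t0" and z: "s * of_int m0 + t0 \<in> \<int>"
  proof (cases "M = {}")
    case True
    have "ARp M M' s 0" using ar True by (simp add: ARp_def affimg_def intmap_def)
    then show ?thesis using that[of 0 0] by simp
  next
    case False
    then obtain m0 where "m0 \<in> M" by blast
    then show ?thesis using that[of t m0] ar by (simp add: ARp_def intmap_def)
  qed
  have s0: "s \<noteq> 0" and im: "intmap s t0 M" and M': "M' = affimg s t0 M" using ar0 by (auto simp: ARp_def)
  define a where "a = (s < 0)"
  define v where "v = \<bar>s\<bar>"
  have v: "v = sg a * s" by (simp add: v_def a_def sg_def)
  have sgi: "sg a \<in> \<int>" by (simp add: sg_def)
  from z obtain zi where zi: "of_int zi = s * of_int m0 + t0" by (metis Ints_cases)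
  define k where "k = (if a then zi else - zi)"
  have k: "of_int k = - sg a * (s * of_int m0 + t0)" by (simp add: k_def sg_def zi)
  have im1: "intmap 1 (of_int (- m0)) M" by (simp add: intmap_int)
  have "intmap v 0 (affimg 1 (of_int (- m0)) M)"
    unfolding intmap_comp[OF im1]
  proof (unfold intmap_def, intro ballI)
    fix j assume "j \<in> M"
    then have zj: "s * of_int j + t0 \<in> \<int>" using im by (simp add: intmap_def)
    have "sg a * ((s * of_int j + t0) - (s * of_int m0 + t0)) \<in> \<int>"
      by (intro Ints_mult Ints_diff sgi zj z)
    moreover have "sg a * ((s * of_int j + t0) - (s * of_int m0 + t0)) = v * 1 * of_int j + (v * of_int (- m0) + 0)"
      by (simp add: v algebra_simps)
    ultimately show "v * 1 * of_int j + (v * of_int (- m0) + 0) \<in> \<int>" by simp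
  qed
  moreover have "affimg v 0 (affimg 1 (of_int (- m0)) M) = affimg (sg a) (of_int k) M'"
  proof -
    have "affimg v 0 (affimg 1 (of_int (- m0)) M) = affimg (v * 1) (v * of_int (- m0) + 0) M"
      by (rule affimg_comp[OF im1])
    also have "\<dots> = affimg (sg a * s) (sg a * t0 + of_int k) M"
      by (simp add: v k algebra_simps)
    also have "\<dots> = affimg (sg a) (of_int k) M'" using affimg_comp[OF im] M' by simp
    finally show ?thesis .
  qed
  moreover have "v > 0" using s0 by (simp add: v_def)
  ultimately show ?thesis unfolding v_def a_def by blast
qed

lemma choose_b:
  assumes g: "g \<in> rules m" and g': "g' \<in> opset m s g" and s0: "s \<noteq> 0"
  shows "\<exists>b. opr m (s < 0) (opc m b g') = g"
proof (cases "s > 0")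
  case True
  then have s: "\<not> s < 0" by simp
  from g' True have "g' = g \<or> g' = hc m g" by (simp add: opset_def)
  then show ?thesis
  proof
    assume "g' = g" then show ?thesis using s by (intro exI[of _ False]) (simp add: opr_def opc_def)
  next
    assume "g' = hc m g" then show ?thesis using s g by (intro exI[of _ True]) (simp add: opr_def opc_def hc_hc)
  qed
next
  case False
  then have s: "s < 0" using s0 by simp
  from g' False have g'': "g' = hr m g \<or> g' = hr m (hc m g)" by (simp add: opset_def)
  from g'' show ?thesis
  proof
    assume "g' = hr m g" then show ?thesis using s g by (intro exI[of _ False]) (simp add: opr_def opc_def hr_hr)
  next
    assume "g' = hr m (hc m g)" then show ?thesis using s g
      by (intro exI[of _ True]) (simp add: opr_def opc_def hr_hr hc_hr[symmetric] hc_hc hc_rules hr_rules)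
  qed
qed

lemma ops_solve:
  assumes g: "g \<in> rules m" and g': "g' \<in> rules m"
    and eq: "opr m a (opc m b g) = opr m a' (opc m b' g')"
  shows "g' \<in> (if a = a' then {g, hc m g} else {hr m g, hr m (hc m g)})"
proof -
  have "opr m a' (opr m a (opc m b g)) = opc m b' g'"
    using eq g' by (cases a'; cases b') (simp_all add: opr_def opc_def hr_hr hc_rules)
  then have "opc m b' (opr m a' (opr m a (opc m b g))) = g'"
    using g' by (cases b') (simp_all add: opc_def hc_hc)
  then show ?thesis using g
    by (cases a; cases a'; cases b; cases b')
       (simp_all add: opr_def opc_def hr_hr hc_hc hc_hr hc_rules hr_rules)
qed

lemma opr_Lbar: "h \<in> Lbar m \<Longrightarrow> opr m a h \<in> Lbar m"
  by (simp add: opr_def hr_Lbar)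
lemma opc_Lbar: "h \<in> Lbar m \<Longrightarrow> opc m b h \<in> Lbar m"
  by (simp add: opc_def hc_Lbar)
lemma Lbar_rules: "h \<in> Lbar m \<Longrightarrow> h \<in> rules m"
  by (simp add: Lbar_def)

lemma ARp_sg: "ARp M (affimg (sg a) (of_int k) M) (sg a) (of_int k)"
  by (simp add: ARp_def intmap_sg) (simp add: sg_def)

lemma scale_red:
  assumes M3: "finite M3" and f3: "f3 \<in> rules (card M3)" and im3: "intmap v 0 M3" and v: "v > 0"
    and M1: "finite M1" and h: "h \<in> Lbar (card M1)" and eq: "Phi M3 f3 = Phi M1 h"
  shows "intmap v 0 M1 \<and> Phi (affimg v 0 M3) f3 = Phi (affimg v 0 M1) h"
proof
  have "M1 = ess (Phi M3 f3)" using ess_irred[OF M1 h] eq by simp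
  then have sub: "M1 \<subseteq> M3" using ess_sub[OF M3] by simp
  then show im1: "intmap v 0 M1" using im3 by (auto simp: intmap_def)
  have v0: "v \<noteq> 0" using v by simp
  show "Phi (affimg v 0 M3) f3 = Phi (affimg v 0 M1) h"
  proof (intro ext)
    fix x i
    have "Phi (affimg v 0 M3) f3 x i = Phi M3 f3 (\<lambda>j. x (i + ef v 0 j)) 0"
      using PhiAff[OF M3 im3 v0 f3, where x=x and i=i] v by simp
    also have "\<dots> = Phi M1 h (\<lambda>j. x (i + ef v 0 j)) 0" by (simp add: eq)
    also have "\<dots> = Phi (affimg v 0 M1) h x i"
      using PhiAff[OF M1 im1 v0 Lbar_rules[OF h], where x=x and i=i] v by simp
    finally show "Phi (affimg v 0 M3) f3 x i = Phi (affimg v 0 M1) h x i" .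
  qed
qed

lemma gsim_char:
  assumes M: "finite M" and M': "finite M'" and g: "g \<in> Lbar (card M)" and g': "g' \<in> Lbar (card M')"
  shows "gsim (Phi M g) (Phi M' g') \<longleftrightarrow> (\<exists>s t. ARp M M' s t \<and> g' \<in> opset (card M) s g)"
proof
  let ?m = "card M"
  assume "gsim (Phi M g) (Phi M' g')"
  then obtain \<Phi>' \<Psi>' v where c1: "gcong (Phi M g) \<Phi>'" and c2: "gcong (Phi M' g') \<Psi>'"
    and v: "v > 0" and sc: "scales v \<Phi>' \<Psi>'" by (auto simp: gsim_def)
  from c1 obtain k a b where \<Phi>': "\<Phi>' = Tk k a b (Phi M g)" using gcong_Tk by blast
  from c2 obtain k' a' b' where \<Psi>': "\<Psi>' = Tk k' a' b' (Phi M' g')" using gcong_Tk by blast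
  define M1 where "M1 = affimg (sg a) (of_int k) M"
  define h where "h = opr ?m a (opc ?m b g)"
  define M2 where "M2 = affimg (sg a') (of_int k') M'"
  define h' where "h' = opr (card M') a' (opc (card M') b' g')"
  have P1: "\<Phi>' = Phi M1 h" using Phi_Tk[OF M Lbar_rules[OF g]] \<Phi>' by (simp add: M1_def h_def)
  have P2: "\<Psi>' = Phi M2 h'" using Phi_Tk[OF M' Lbar_rules[OF g']] \<Psi>' by (simp add: M2_def h'_def)
  have A1: "ARp M M1 (sg a) (of_int k)" unfolding M1_def by (rule ARp_sg)
  have A2: "ARp M' M2 (sg a') (of_int k')" unfolding M2_def by (rule ARp_sg)
  have cM1: "card M1 = ?m" using ARp_card[OF A1] .
  have fM1: "finite M1" using ARp_finite[OF A1 M] .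
  have cM2: "card M2 = card M'" using ARp_card[OF A2] .
  have fM2: "finite M2" using ARp_finite[OF A2 M'] .
  have hL: "h \<in> Lbar (card M1)" unfolding cM1 h_def by (intro opr_Lbar opc_Lbar g)
  have hL': "h' \<in> Lbar (card M2)" unfolding cM2 h'_def by (intro opr_Lbar opc_Lbar g')
  from sc obtain M3 f3 where M3: "finite M3" and f3: "f3 \<in> rules (card M3)" and im3: "intmap v 0 M3"
    and e3: "\<Phi>' = Phi M3 f3" and e3': "\<Psi>' = Phi (affimg v 0 M3) f3"
    by (auto simp: scales_def int_scalable_eq smul_eq)
  from scale_red[OF M3 f3 im3 v fM1 hL] e3 P1
  have im1: "intmap v 0 M1" and e4: "Phi (affimg v 0 M3) f3 = Phi (affimg v 0 M1) h" by auto
  have A3: "ARp M1 (affimg v 0 M1) v 0" using im1 v by (simp add: ARp_def)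
  have cX: "card (affimg v 0 M1) = card M1" using ARp_card[OF A3] .
  have fX: "finite (affimg v 0 M1)" using ARp_finite[OF A3 fM1] .
  have "Phi (affimg v 0 M1) h = Phi M2 h'" using e4 e3' P2 by simp
  from Phi_unique[OF fX fM2 _ hL' this] hL cX
  have X: "affimg v 0 M1 = M2" and hh: "h = h'" by auto
  have A4: "ARp M M2 (v * sg a) (v * of_int k + 0)" using ARp_trans[OF A1 A3] X by simp
  have A5: "ARp M M' (1 / sg a' * (v * sg a)) (1 / sg a' * (v * of_int k + 0) + - of_int k' / sg a')"
    using ARp_trans[OF A4 ARp_sym[OF A2]] .
  have cM': "card M' = ?m" using ARp_card[OF A5] .
  have "g' \<in> (if a = a' then {g, hc ?m g} else {hr ?m g, hr ?m (hc ?m g)})"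
    using ops_solve[of g ?m g' a b a' b'] hh g g' cM' by (simp add: h_def h'_def Lbar_rules)
  moreover have "(1 / sg a' * (v * sg a) > 0) = (a = a')"
    using v by (cases a; cases a') (simp_all add: sg_def)
  ultimately have "g' \<in> opset ?m (1 / sg a' * (v * sg a)) g" by (simp add: opset_def)
  with A5 show "\<exists>s t. ARp M M' s t \<and> g' \<in> opset ?m s g" by blast
next
  let ?m = "card M"
  assume "\<exists>s t. ARp M M' s t \<and> g' \<in> opset ?m s g"
  then obtain s t where ar: "ARp M M' s t" and go: "g' \<in> opset ?m s g" by blast
  have s0: "s \<noteq> 0" using ar by (simp add: ARp_def)
  from core[OF ar] obtain m0 k where v: "\<bar>s\<bar> > 0" and im: "intmap \<bar>s\<bar> 0 (affimg 1 (of_int (- m0)) M)"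
    and eqs: "affimg \<bar>s\<bar> 0 (affimg 1 (of_int (- m0)) M) = affimg (sg (s < 0)) (of_int k) M'" by blast
  from choose_b[OF Lbar_rules[OF g] go s0] obtain b where b: "opr ?m (s < 0) (opc ?m b g') = g" by blast
  have cM': "card M' = ?m" using ARp_card[OF ar] .
  define M3 where "M3 = affimg 1 (of_int (- m0)) M"
  have A3: "ARp M M3 1 (of_int (- m0))" by (simp add: M3_def ARp_def intmap_int)
  have fM3: "finite M3" using ARp_finite[OF A3 M] .
  have cM3: "card M3 = ?m" using ARp_card[OF A3] .
  have P1: "Tk (- m0) False False (Phi M g) = Phi M3 g"
    using Phi_Tk[OF M Lbar_rules[OF g], of "- m0" False False] by (simp add: M3_def sg_def opr_def opc_def)
  have P2: "Tk k (s < 0) b (Phi M' g') = Phi (affimg \<bar>s\<bar> 0 M3) g"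
    using Phi_Tk[OF M' Lbar_rules[OF g'], of k "s < 0" b] eqs by (simp add: M3_def cM' b)
  have "scales \<bar>s\<bar> (Tk (- m0) False False (Phi M g)) (Tk k (s < 0) b (Phi M' g'))"
    unfolding scales_def P1 P2 using fM3 im g cM3
    by (intro exI[of _ M3] exI[of _ g]) (simp add: int_scalable_eq smul_eq M3_def Lbar_rules)
  then show "gsim (Phi M g) (Phi M' g')"
    unfolding gsim_def using Tk_gcong v by blast
qed

lemma scong_iff: "scong M M'' \<longleftrightarrow> (\<exists>a k. M'' = affimg (sg a) (of_int k) M)"
proof
  assume "scong M M''"
  then obtain j where "M'' = (\<lambda>i. j + i) ` M \<or> M'' = (\<lambda>i. j - i) ` M" by (auto simp: scong_def)
  then show "\<exists>a k. M'' = affimg (sg a) (of_int k) M"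
  proof
    assume "M'' = (\<lambda>i. j + i) ` M"
    then have "M'' = affimg (sg False) (of_int j) M" by (simp add: trans_eq sg_def)
    then show ?thesis by blast
  next
    assume "M'' = (\<lambda>i. j - i) ` M"
    then have "M'' = affimg (sg True) (of_int j) M" by (simp add: refl_eq sg_def)
    then show ?thesis by blast
  qed
next
  assume "\<exists>a k. M'' = affimg (sg a) (of_int k) M"
  then obtain a k where e: "M'' = affimg (sg a) (of_int k) M" by blast
  show "scong M M''"
  proof (cases a)
    case True
    then have "M'' = (\<lambda>i. k - i) ` M" using e by (simp add: refl_eq sg_def)
    then show ?thesis by (auto simp: scong_def)
  next
    case False
    then have "M'' = (\<lambda>i. k + i) ` M" using e by (simp add: trans_eq sg_def)
    then show ?thesis by (auto simp: scong_def)
  qed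
qed

lemma ssim_char: "ssim M M' \<longleftrightarrow> (\<exists>s t. ARp M M' s t)"
proof
  assume "ssim M M'"
  then obtain M'' M''' v where v: "v > 0" and c1: "scong M M''" and c2: "scong M' M'''"
    and im: "int_scalable v M''" and e: "M''' = smul v M''" by (auto simp: ssim_def)
  from c1 obtain a k where e1: "M'' = affimg (sg a) (of_int k) M" by (auto simp: scong_iff)
  from c2 obtain a' k' where e2: "M''' = affimg (sg a') (of_int k') M'" by (auto simp: scong_iff)
  have A1: "ARp M M'' (sg a) (of_int k)" using e1 ARp_sg by simp
  have A2: "ARp M' M''' (sg a') (of_int k')" using e2 ARp_sg by simp
  have A3: "ARp M'' M''' v 0" using v im e by (simp add: ARp_def int_scalable_eq smul_eq)
  show "\<exists>s t. ARp M M' s t" using ARp_trans[OF ARp_trans[OF A1 A3] ARp_sym[OF A2]] by blast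
next
  assume "\<exists>s t. ARp M M' s t"
  then obtain s t where ar: "ARp M M' s t" by blast
  from core[OF ar] obtain m0 k where v: "\<bar>s\<bar> > 0" and im: "intmap \<bar>s\<bar> 0 (affimg 1 (of_int (- m0)) M)"
    and eqs: "affimg \<bar>s\<bar> 0 (affimg 1 (of_int (- m0)) M) = affimg (sg (s < 0)) (of_int k) M'" by blast
  have c1: "scong M (affimg 1 (of_int (- m0)) M)"
    unfolding scong_iff by (rule exI[of _ False], rule exI[of _ "- m0"]) (simp add: sg_def)
  have c2: "scong M' (smul \<bar>s\<bar> (affimg 1 (of_int (- m0)) M))"
    unfolding scong_iff smul_eq eqs by blast
  show "ssim M M'" unfolding ssim_def int_scalable_eq
    by (rule exI[of _ "affimg 1 (of_int (- m0)) M"], rule exI[of _ "smul \<bar>s\<bar> (affimg 1 (of_int (- m0)) M)"],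
        rule exI[of _ "\<bar>s\<bar>"]) (use v c1 c2 im in blast)
qed



definition CRel :: "nat \<Rightarrow> ((bool list \<Rightarrow> bool) \<times> (bool list \<Rightarrow> bool)) set" where
  "CRel m = {(f, g). f \<in> Lbar m \<and> g \<in> Lbar m \<and> (g = f \<or> g = hc m f)}"

lemma finite_rules: "finite (rules m)"
proof -
  have "rules m \<subseteq> (\<lambda>S w. w \<in> S) ` Pow {w :: bool list. length w = m}"
  proof
    fix f assume f: "f \<in> rules m"
    have "f = (\<lambda>w. w \<in> {w. length w = m \<and> f w})" using f by (auto simp: rules_def fun_eq_iff)
    then show "f \<in> (\<lambda>S w. w \<in> S) ` Pow {w :: bool list. length w = m}" by blast
  qed
  moreover have "finite {w :: bool list. length w = m}"
    using finite_lists_length_eq[of "UNIV :: bool set" m] by simp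
  ultimately show ?thesis by (meson finite_Pow_iff finite_imageI finite_subset)
qed

lemma finite_Lbar: "finite (Lbar m)"
  using finite_rules by (rule finite_subset[rotated]) (auto simp: Lbar_def)

lemma equiv_orbrel: "equiv (Lbar m) (orbrel m)"
proof (rule equivI)
  show "orbrel m \<subseteq> Lbar m \<times> Lbar m" by (auto simp: orbrel_def)
  show "refl_on (Lbar m) (orbrel m)"
    by (rule refl_onI) (auto simp: orbrel_def intro: exI[of _ S1])
  show "sym (orbrel m)"
  proof (rule symI)
    fix f g assume "(f, g) \<in> orbrel m"
    then obtain \<alpha> where "f \<in> Lbar m" "g \<in> Lbar m" "g = act m \<alpha> f" by (auto simp: orbrel_def)
    then have "f = act m \<alpha> g" using act_inv Lbar_rules by metis
    then show "(g, f) \<in> orbrel m" using \<open>f \<in> Lbar m\<close> \<open>g \<in> Lbar m\<close> by (auto simp: orbrel_def)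
  qed
  show "trans (orbrel m)"
  proof (rule transI)
    fix f g h assume "(f, g) \<in> orbrel m" "(g, h) \<in> orbrel m"
    then obtain \<alpha> \<beta> where "f \<in> Lbar m" "h \<in> Lbar m" "g = act m \<alpha> f" "h = act m \<beta> g"
      by (auto simp: orbrel_def)
    moreover then obtain \<gamma> where "act m \<beta> (act m \<alpha> f) = act m \<gamma> f" using act_comp Lbar_rules by metis
    ultimately show "(f, h) \<in> orbrel m" by (auto simp: orbrel_def)
  qed
qed

lemma equiv_CRel: "equiv (Lbar m) (CRel m)"
proof (rule equivI)
  show "CRel m \<subseteq> Lbar m \<times> Lbar m" by (auto simp: CRel_def)
  show "refl_on (Lbar m) (CRel m)"
    by (rule refl_onI) (auto simp: CRel_def)
  show "sym (CRel m)"
    by (rule symI) (auto simp: CRel_def hc_hc Lbar_rules)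
  show "trans (CRel m)"
    by (rule transI) (auto simp: CRel_def hc_hc Lbar_rules)
qed

lemma CRel_sub: "CRel m \<subseteq> orbrel m"
proof
  fix p assume "p \<in> CRel m"
  then obtain f g where p: "p = (f, g)" "f \<in> Lbar m" "g \<in> Lbar m" "g = f \<or> g = hc m f"
    by (auto simp: CRel_def)
  then have "g = act m S1 f \<or> g = act m Sc f" by auto
  then have "\<exists>\<alpha>. g = act m \<alpha> f" by blast
  then show "p \<in> orbrel m" using p by (auto simp: orbrel_def)
qed

lemma orbrel_iff: "f \<in> Lbar m \<Longrightarrow> (f, g) \<in> orbrel m \<longleftrightarrow> (\<exists>\<alpha>. g = act m \<alpha> f)"
  by (auto simp: orbrel_def act_Lbar)

lemma all_S2: "(\<forall>\<alpha>. P \<alpha>) = (P S1 \<and> P Sr \<and> P Sc \<and> P Src)"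
proof
  assume "P S1 \<and> P Sr \<and> P Sc \<and> P Src"
  then show "\<forall>\<alpha>. P \<alpha>" by (metis S2.exhaust)
qed simp

lemma stab_char: "f \<in> rules m \<Longrightarrow> stab m f = {\<alpha>. \<alpha> = S1 \<or> (\<alpha> = Sr \<and> hr m f = f) \<or> (\<alpha> = Sc \<and> hc m f = f)
   \<or> (\<alpha> = Src \<and> hr m f = hc m f)}"
proof -
  assume f: "f \<in> rules m"
  have e: "hr m (hc m f) = f \<longleftrightarrow> hr m f = hc m f"
    using f hr_hr hc_rules by metis
  show ?thesis unfolding stab_def set_eq_iff mem_Collect_eq all_S2 by (simp add: e)
qed

lemma stab_two: "f \<in> rules m \<Longrightarrow> (stab m f = {S1} \<or> stab m f = {S1, Sc}) \<longleftrightarrow> \<not> (hr m f = f \<or> hr m f = hc m f)"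
  by (simp add: stab_char set_eq_iff all_S2) blast

lemma hr_orb: "f \<in> Lbar m \<Longrightarrow> (f, hr m f) \<in> orbrel m"
proof -
  assume f: "f \<in> Lbar m"
  have "\<exists>\<alpha>. hr m f = act m \<alpha> f" by (rule exI[of _ Sr]) simp
  then show ?thesis using f by (auto simp: orbrel_def hr_Lbar)
qed

lemma fib:
  assumes f: "f \<in> Lbar m"
  shows "{X \<in> Lbar m // CRel m. X \<subseteq> orbrel m `` {f}} = {CRel m `` {f}, CRel m `` {hr m f}}"
proof
  have eqC: "equiv (Lbar m) (CRel m)" by (rule equiv_CRel)
  have eqO: "equiv (Lbar m) (orbrel m)" by (rule equiv_orbrel)
  have fr: "f \<in> rules m" using f Lbar_rules by blast
  show "{X \<in> Lbar m // CRel m. X \<subseteq> orbrel m `` {f}} \<subseteq> {CRel m `` {f}, CRel m `` {hr m f}}"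
  proof
    fix X assume "X \<in> {X \<in> Lbar m // CRel m. X \<subseteq> orbrel m `` {f}}"
    then have X: "X \<in> Lbar m // CRel m" "X \<subseteq> orbrel m `` {f}" by auto
    then obtain g where g: "X = CRel m `` {g}" "g \<in> Lbar m" by (auto elim: quotientE)
    have "g \<in> X" using equiv_class_self[OF eqC g(2)] g(1) by simp
    then have "(f, g) \<in> orbrel m" using X by auto
    then obtain \<alpha> where ga: "g = act m \<alpha> f" using orbrel_iff[OF f] by blast
    show "X \<in> {CRel m `` {f}, CRel m `` {hr m f}}"
    proof (cases \<alpha>)
      case S1 then show ?thesis using g ga by simp
    next
      case Sr then show ?thesis using g ga by simp
    next
      case Sc
      then have "(f, g) \<in> CRel m" using ga f g by (simp add: CRel_def)
      then have "CRel m `` {f} = CRel m `` {g}" by (rule equiv_class_eq[OF eqC])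
      then show ?thesis using g by simp
    next
      case Src
      then have "g = hc m (hr m f)" using ga by (simp add: hc_hr)
      then have "(hr m f, g) \<in> CRel m" using g f by (simp add: CRel_def hr_Lbar)
      then have "CRel m `` {hr m f} = CRel m `` {g}" by (rule equiv_class_eq[OF eqC])
      then show ?thesis using g by simp
    qed
  qed
  have sub: "CRel m `` {h} \<subseteq> orbrel m `` {h}" for h using CRel_sub by blast
  have s1: "CRel m `` {f} \<subseteq> orbrel m `` {f}" by (rule sub)
  have "orbrel m `` {hr m f} = orbrel m `` {f}"
    using equiv_class_eq[OF eqO hr_orb[OF f]] by simp
  then have s2: "CRel m `` {hr m f} \<subseteq> orbrel m `` {f}" using sub[of "hr m f"] by simp
  show "{CRel m `` {f}, CRel m `` {hr m f}} \<subseteq> {X \<in> Lbar m // CRel m. X \<subseteq> orbrel m `` {f}}"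
    using s1 s2 f hr_Lbar[OF f] by (auto intro: quotientI)
qed

lemma card_fib:
  assumes f: "f \<in> Lbar m"
  shows "card {X \<in> Lbar m // CRel m. X \<subseteq> orbrel m `` {f}} = (if hr m f = f \<or> hr m f = hc m f then 1 else 2)"
proof -
  have "CRel m `` {f} = CRel m `` {hr m f} \<longleftrightarrow> (f, hr m f) \<in> CRel m"
    by (rule eq_equiv_class_iff[OF equiv_CRel f hr_Lbar[OF f]])
  also have "\<dots> \<longleftrightarrow> hr m f = f \<or> hr m f = hc m f" using f hr_Lbar[OF f] by (auto simp: CRel_def)
  finally show ?thesis unfolding fib[OF f] by auto
qed

lemma tbar_iff:
  assumes f: "f \<in> Lbar m"
  shows "orbrel m `` {f} \<in> tbar m U \<longleftrightarrow> stab m f = U"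
proof
  assume "orbrel m `` {f} \<in> tbar m U"
  then obtain g where g: "orbrel m `` {f} = orbrel m `` {g}" "g \<in> Lbar m" "stab m g = U"
    by (auto simp: tbar_def)
  then have "(f, g) \<in> orbrel m" using eq_equiv_class_iff[OF equiv_orbrel f g(2)] by simp
  then obtain \<alpha> where "g = act m \<alpha> f" using orbrel_iff[OF f] by blast
  then show "stab m f = U" using g(3) stab_act[OF Lbar_rules[OF f]] by simp
next
  assume "stab m f = U"
  then show "orbrel m `` {f} \<in> tbar m U" using f unfolding tbar_def by blast
qed

lemma tbar_sub: "tbar m U \<subseteq> Lbar m // orbrel m"
  by (auto simp: tbar_def intro: quotientI)

lemma count_c:
  "card (Lbar m // CRel m) = card (Lbar m // orbrel m) + card (tbar m {S1}) + card (tbar m {S1, Sc})"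
proof -
  let ?A = "Lbar m" and ?Q = "Lbar m // orbrel m" and ?Qc = "Lbar m // CRel m"
  let ?Fib = "\<lambda>Ob. {X \<in> ?Qc. X \<subseteq> Ob}"
  let ?T = "tbar m {S1} \<union> tbar m {S1, Sc}"
  have eqC: "equiv ?A (CRel m)" by (rule equiv_CRel)
  have eqO: "equiv ?A (orbrel m)" by (rule equiv_orbrel)
  have fQ: "finite ?Q" using finite_quotient[OF finite_Lbar] eqO by (simp add: equiv_def)
  have fQc: "finite ?Qc" using finite_quotient[OF finite_Lbar] eqC by (simp add: equiv_def)
  have U: "?Qc = (\<Union>Ob\<in>?Q. ?Fib Ob)"
  proof
    show "?Qc \<subseteq> (\<Union>Ob\<in>?Q. ?Fib Ob)"
    proof
      fix X assume X: "X \<in> ?Qc"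
      then obtain g where g: "X = CRel m `` {g}" "g \<in> ?A" by (auto elim: quotientE)
      have "X \<subseteq> orbrel m `` {g}" using g CRel_sub by blast
      moreover have "orbrel m `` {g} \<in> ?Q" using g by (auto intro: quotientI)
      ultimately show "X \<in> (\<Union>Ob\<in>?Q. ?Fib Ob)" using X by blast
    qed
  qed blast
  have cU: "card ?Qc = card (\<Union>Ob\<in>?Q. ?Fib Ob)" by (rule arg_cong[where f=card, OF U])
  have "card ?Qc = (\<Sum>Ob\<in>?Q. card (?Fib Ob))"
    unfolding cU
  proof (rule card_UN_disjoint[OF fQ])
    show "\<forall>Ob\<in>?Q. finite (?Fib Ob)" using fQc by auto
    show "\<forall>Ob\<in>?Q. \<forall>Pb\<in>?Q. Ob \<noteq> Pb \<longrightarrow> ?Fib Ob \<inter> ?Fib Pb = {}"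
    proof (intro ballI impI)
      fix Ob Pb assume Ob: "Ob \<in> ?Q" "Pb \<in> ?Q" "Ob \<noteq> Pb"
      have "Ob \<inter> Pb = {}" using quotient_disj[OF eqO Ob(1) Ob(2)] Ob(3) by blast
      moreover have "X \<noteq> {}" if "X \<in> ?Qc" for X
      proof -
        from that obtain g where g: "X = CRel m `` {g}" "g \<in> ?A" by (auto elim: quotientE)
        then show ?thesis using equiv_class_self[OF eqC g(2)] by blast
      qed
      ultimately show "?Fib Ob \<inter> ?Fib Pb = {}" by blast
    qed
  qed
  also have "\<dots> = (\<Sum>Ob\<in>?Q. 1 + (if Ob \<in> ?T then 1 else 0))"
  proof (rule sum.cong[OF refl])
    fix Ob assume "Ob \<in> ?Q"
    then obtain f where f: "Ob = orbrel m `` {f}" "f \<in> ?A" by (auto elim: quotientE)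
    have t1: "Ob \<in> tbar m {S1} \<longleftrightarrow> stab m f = {S1}" using tbar_iff[OF f(2), of "{S1}"] f(1) by simp
    have t2: "Ob \<in> tbar m {S1, Sc} \<longleftrightarrow> stab m f = {S1, Sc}" using tbar_iff[OF f(2), of "{S1, Sc}"] f(1) by simp
    have "Ob \<in> ?T \<longleftrightarrow> (stab m f = {S1} \<or> stab m f = {S1, Sc})" using t1 t2 by (simp only: Un_iff)
    also have "\<dots> \<longleftrightarrow> \<not> (hr m f = f \<or> hr m f = hc m f)" by (rule stab_two[OF Lbar_rules[OF f(2)]])
    finally show "card (?Fib Ob) = 1 + (if Ob \<in> ?T then 1 else 0)"
      using card_fib[OF f(2)] f(1) by simp
  qed
  also have "\<dots> = card ?Q + card (?Q \<inter> ?T)"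
  proof -
    have e1: "(\<Sum>Ob\<in>?Q. (1::nat) + (if Ob \<in> ?T then 1 else 0)) =
      (\<Sum>Ob\<in>?Q. 1) + (\<Sum>Ob\<in>?Q. if Ob \<in> ?T then 1 else 0)" by (rule sum.distrib)
    have e2: "(\<Sum>Ob\<in>?Q. if Ob \<in> ?T then 1 else (0::nat)) = (\<Sum>Ob\<in>?Q \<inter> ?T. 1)"
      by (rule sum.inter_restrict[OF fQ, symmetric])
    show ?thesis unfolding e1 e2 by simp
  qed
  also have "?Q \<inter> ?T = ?T" using tbar_sub by blast
  also have "card ?T = card (tbar m {S1}) + card (tbar m {S1, Sc})"
  proof (rule card_Un_disjoint)
    show "finite (tbar m {S1})" using fQ tbar_sub finite_subset by blast
    show "finite (tbar m {S1, Sc})" using fQ tbar_sub finite_subset by blast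
    show "tbar m {S1} \<inter> tbar m {S1, Sc} = {}"
    proof (rule ccontr)
      assume "tbar m {S1} \<inter> tbar m {S1, Sc} \<noteq> {}"
      then obtain Ob where Ob: "Ob \<in> tbar m {S1}" "Ob \<in> tbar m {S1, Sc}" by blast
      then obtain f where f: "Ob = orbrel m `` {f}" "f \<in> ?A" by (auto simp: tbar_def)
      then have "stab m f = {S1}" "stab m f = {S1, Sc}" using Ob tbar_iff by auto
      then have "Sc \<in> {S1}" by simp
      then show False by simp
    qed
  qed
  finally show ?thesis by simp
qed



type_synonym rl = "bool list \<Rightarrow> bool"

definition PR :: "((int set \<times> rl) \<times> (int set \<times> rl)) set" where
  "PR = {(p, q). \<exists>s t. ARp (fst p) (fst q) s t \<and> snd q \<in> opset (card (fst p)) s (snd p)}"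

definition PS :: "int set \<Rightarrow> (int set \<times> rl) set" where
  "PS N = {(M, g). M \<subseteq> N \<and> g \<in> Lbar (card M)}"

definition PRP :: "int set \<Rightarrow> ((int set \<times> rl) \<times> (int set \<times> rl)) set" where
  "PRP N = {(p, q). p \<in> PS N \<and> q \<in> PS N \<and> (p, q) \<in> PR}"

lemma opset_refl: "g \<in> opset m 1 g"
  by (simp add: opset_def)

lemma opset_sym:
  assumes g: "g \<in> rules m" and s: "s \<noteq> 0" and g': "g' \<in> opset m s g"
  shows "g \<in> opset m (1 / s) g'"
proof (cases "s > 0")
  case True
  then show ?thesis using g g' by (auto simp: opset_def hc_hc)
next
  case False
  then have "s < 0" using s by simp
  then show ?thesis using g g' False by (auto simp: opset_def hc_hc hr_hr hc_hr hc_rules hr_rules)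
qed

lemma opset_trans:
  assumes g: "g \<in> rules m" and s: "s \<noteq> 0" "s' \<noteq> 0" and g': "g' \<in> opset m s g"
    and g'': "g'' \<in> opset m s' g'"
  shows "g'' \<in> opset m (s' * s) g"
proof -
  have pos: "(s' * s > 0) \<longleftrightarrow> (s > 0 \<longleftrightarrow> s' > 0)" using s by (auto simp: zero_less_mult_iff)
  show ?thesis
  proof (cases "s > 0"; cases "s' > 0")
  qed (use g g' g'' pos in \<open>auto simp: opset_def hc_hc hr_hr hc_hr hc_rules hr_rules\<close>)
qed

lemma PS_rules: "p \<in> PS N \<Longrightarrow> snd p \<in> rules (card (fst p))"
  by (auto simp: PS_def Lbar_rules)

lemma equiv_PRP: "equiv (PS N) (PRP N)"
proof (rule equivI)
  show "PRP N \<subseteq> PS N \<times> PS N" by (auto simp: PRP_def)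
  show "refl_on (PS N) (PRP N)"
  proof (rule refl_onI)
    fix p assume "p \<in> PS N"
    moreover have "(p, p) \<in> PR" unfolding PR_def using ARp_refl opset_refl by blast
    ultimately show "(p, p) \<in> PRP N" by (simp add: PRP_def)
  qed
  show "sym (PRP N)"
  proof (rule symI)
    fix p q assume "(p, q) \<in> PRP N"
    then have p: "p \<in> PS N" "q \<in> PS N" and "(p, q) \<in> PR" by (auto simp: PRP_def)
    then obtain s t where a: "ARp (fst p) (fst q) s t" and o: "snd q \<in> opset (card (fst p)) s (snd p)"
      by (auto simp: PR_def)
    have s: "s \<noteq> 0" using a by (simp add: ARp_def)
    have "snd p \<in> opset (card (fst q)) (1 / s) (snd q)"
      using opset_sym[OF PS_rules[OF p(1)] s o] ARp_card[OF a] by simp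
    then have "(q, p) \<in> PR" using ARp_sym[OF a] unfolding PR_def by blast
    then show "(q, p) \<in> PRP N" using p by (simp add: PRP_def)
  qed
  show "trans (PRP N)"
  proof (rule transI)
    fix p q r assume "(p, q) \<in> PRP N" "(q, r) \<in> PRP N"
    then have p: "p \<in> PS N" "r \<in> PS N" and "(p, q) \<in> PR" "(q, r) \<in> PR" by (auto simp: PRP_def)
    then obtain s t s' t' where a: "ARp (fst p) (fst q) s t" and o: "snd q \<in> opset (card (fst p)) s (snd p)"
      and a': "ARp (fst q) (fst r) s' t'" and o': "snd r \<in> opset (card (fst q)) s' (snd q)"
      by (auto simp: PR_def)
    have s: "s \<noteq> 0" "s' \<noteq> 0" using a a' by (auto simp: ARp_def)
    have "snd r \<in> opset (card (fst p)) (s' * s) (snd p)"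
      using opset_trans[OF PS_rules[OF p(1)] s o] o' ARp_card[OF a] by simp
    then have "(p, r) \<in> PR" using ARp_trans[OF a a'] unfolding PR_def by blast
    then show "(p, r) \<in> PRP N" using p by (simp add: PRP_def)
  qed
qed

definition FF :: "int set \<times> rl \<Rightarrow> gmap" where "FF p = Phi (fst p) (snd p)"

lemma Phi_in_G2:
  assumes N: "finite N" and MN: "M \<subseteq> N"
  shows "Phi M g \<in> G2 N"
proof -
  have M: "finite M" using N MN finite_subset by blast
  define f where "f = (\<lambda>w. length w = card N \<and> Phi M g (realize N w) 0)"
  have "Phi N f = Phi M g"
  proof (intro ext)
    fix x i
    have "Phi N f x i = Phi M g (realize N (map (\<lambda>j. x (i + j)) (SL N))) 0"
      by (simp add: Phi_def f_def length_sorted_list_of_set)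
    also have "\<dots> = Phi M g (\<lambda>j. x (i + j)) 0"
      by (rule Phi_local[OF M]) (use realize_in[OF N] MN in auto)
    also have "\<dots> = Phi M g x i" by (simp add: Phi_shift[symmetric])
    finally show "Phi N f x i = Phi M g x i" .
  qed
  moreover have "f \<in> rules (card N)" by (simp add: rules_def f_def)
  ultimately show ?thesis unfolding G2_def mem_Collect_eq by (intro exI[of _ f]) simp
qed

lemma G2_bij: assumes N: "finite N" shows "bij_betw FF (PS N) (G2 N)"
proof (rule bij_betwI')
  fix p q assume p: "p \<in> PS N" and q: "q \<in> PS N"
  obtain M g where pe: "p = (M, g)" by (cases p)
  obtain M' g' where qe: "q = (M', g')" by (cases q)
  have M: "finite M" "g \<in> Lbar (card M)" using p pe N finite_subset by (auto simp: PS_def)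
  have M': "finite M'" "g' \<in> Lbar (card M')" using q qe N finite_subset by (auto simp: PS_def)
  show "(FF p = FF q) = (p = q)"
  proof
    assume "FF p = FF q"
    then have "Phi M g = Phi M' g'" by (simp add: pe qe FF_def)
    then show "p = q" using Phi_unique[OF M(1) M'(1) M(2) M'(2)] pe qe by simp
  qed simp
next
  fix p assume "p \<in> PS N"
  then show "FF p \<in> G2 N" using Phi_in_G2[OF N] by (auto simp: PS_def FF_def)
next
  fix \<Phi> assume "\<Phi> \<in> G2 N"
  then obtain f where f: "\<Phi> = Phi N f" by (auto simp: G2_def)
  have "(ess \<Phi>, redrule N f) \<in> PS N" using reduce(1)[OF N, of f] ess_sub[OF N, of f] f
    by (simp add: PS_def)
  moreover have "\<Phi> = FF (ess \<Phi>, redrule N f)" using reduce(2)[OF N, of f] f by (simp add: FF_def)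
  ultimately show "\<exists>p\<in>PS N. \<Phi> = FF p" by blast
qed

lemma gsim_PR:
  assumes N: "finite N" and p: "p \<in> PS N" and q: "q \<in> PS N"
  shows "gsim (FF p) (FF q) \<longleftrightarrow> (p, q) \<in> PR"
proof -
  obtain M g where pe: "p = (M, g)" by (cases p)
  obtain M' g' where qe: "q = (M', g')" by (cases q)
  have M: "finite M" "g \<in> Lbar (card M)" using p pe N finite_subset by (auto simp: PS_def)
  have M': "finite M'" "g' \<in> Lbar (card M')" using q qe N finite_subset by (auto simp: PS_def)
  show ?thesis using gsim_char[OF M(1) M'(1) M(2) M'(2)] by (simp add: pe qe FF_def PR_def)
qed

lemma card_quot_bij:
  assumes bij: "bij_betw F A B" and R: "R \<subseteq> B \<times> B"
  shows "card (B // R) = card (A // {(p, q). p \<in> A \<and> q \<in> A \<and> (F p, F q) \<in> R})"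
proof -
  let ?R' = "{(p, q). p \<in> A \<and> q \<in> A \<and> (F p, F q) \<in> R}"
  have img: "F ` (?R' `` {a}) = R `` {F a}" if a: "a \<in> A" for a
  proof
    show "F ` (?R' `` {a}) \<subseteq> R `` {F a}" by auto
    show "R `` {F a} \<subseteq> F ` (?R' `` {a})"
    proof
      fix y assume "y \<in> R `` {F a}"
      then have y: "(F a, y) \<in> R" by auto
      then have "y \<in> B" using R by auto
      then obtain q where "q \<in> A" "y = F q" using bij by (auto simp: bij_betw_def)
      then show "y \<in> F ` (?R' `` {a})" using a y by auto
    qed
  qed
  have "B // R = (image F) ` (A // ?R')"
  proof
    show "B // R \<subseteq> image F ` (A // ?R')"
    proof
      fix X assume "X \<in> B // R"
      then obtain b where b: "X = R `` {b}" "b \<in> B" by (auto elim: quotientE)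
      then obtain a where a: "a \<in> A" "b = F a" using bij by (auto simp: bij_betw_def)
      then have "X = F ` (?R' `` {a})" using img b by simp
      then show "X \<in> image F ` (A // ?R')" using quotientI[of a A ?R'] a(1) by blast
    qed
    show "image F ` (A // ?R') \<subseteq> B // R"
    proof
      fix X assume "X \<in> image F ` (A // ?R')"
      then obtain a where a: "a \<in> A" "X = F ` (?R' `` {a})" by (auto elim!: quotientE)
      have "F a \<in> B" using bij a by (auto simp: bij_betw_def)
      then show "X \<in> B // R" using img[OF a(1)] a by (auto intro: quotientI)
    qed
  qed
  moreover have "inj_on (image F) (A // ?R')"
  proof (rule inj_on_subset)
    show "inj_on (image F) (Pow A)" using bij by (simp add: bij_betw_def inj_on_image_Pow)
    show "A // ?R' \<subseteq> Pow A" by (auto simp: quotient_def)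
  qed
  ultimately show ?thesis by (simp add: card_image)
qed

lemma card_same_kernel:
  assumes "\<And>a b. a \<in> A \<Longrightarrow> b \<in> A \<Longrightarrow> f a = f b \<longleftrightarrow> g a = g b"
  shows "card (f ` A) = card (g ` A)"
proof -
  let ?h = "\<lambda>y. f (inv_into A g y)"
  have "f ` A = ?h ` (g ` A)"
  proof -
    have "?h (g a) = f a" if "a \<in> A" for a
      using assms[of "inv_into A g (g a)" a] that inv_into_into[of "g a" g A] f_inv_into_f[of "g a" g A]
      by auto
    then show ?thesis by (auto simp: image_image)
  qed
  moreover have "inj_on ?h (g ` A)"
  proof
    fix y1 y2 assume y: "y1 \<in> g ` A" "y2 \<in> g ` A" "?h y1 = ?h y2"
    have "inv_into A g y1 \<in> A" "inv_into A g y2 \<in> A" using y by (auto intro: inv_into_into)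
    then have "g (inv_into A g y1) = g (inv_into A g y2)" using assms y(3) by blast
    then show "y1 = y2" using y f_inv_into_f by metis
  qed
  ultimately show ?thesis by (simp add: card_image)
qed

lemma quot_image: "A // r = (\<lambda>a. r `` {a}) ` A"
  by (auto simp: quotient_def)



lemma neg_sym:
  assumes R: "finite R" and ar: "ARp R R s t" and s: "s < 0"
  shows "R \<in> Sym"
proof (cases "R = {}")
  case True
  then show ?thesis unfolding Sym_def by (intro CollectI exI[of _ 0]) simp
next
  case False
  have im: "intmap s t R" and RR: "R = affimg s t R" using ar by (auto simp: ARp_def)
  define lo where "lo = Min R"
  define hi where "hi = Max R"
  have lo: "lo \<in> R" "\<And>x. x \<in> R \<Longrightarrow> lo \<le> x" using R False by (auto simp: lo_def)
  have hi: "hi \<in> R" "\<And>x. x \<in> R \<Longrightarrow> x \<le> hi" using R False by (auto simp: hi_def)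
  have efR: "ef s t x \<in> R" if "x \<in> R" for x using that affimg_eq[OF im] RR by auto
  have efv: "of_int (ef s t x) = s * of_int x + t" if "x \<in> R" for x using of_int_ef[OF im that] .
  have pre: "\<exists>y\<in>R. of_int z = s * of_int y + t" if "z \<in> R" for z
    using that RR by (auto simp: affimg_def)
  have e1: "(of_int hi :: rat) = s * of_int lo + t"
  proof (rule antisym)
    obtain y where y: "y \<in> R" "of_int hi = s * of_int y + t" using pre[OF hi(1)] by blast
    have "s * of_int y \<le> s * of_int lo" using lo(2)[OF y(1)] s by (simp add: mult_left_mono_neg)
    then show "(of_int hi :: rat) \<le> s * of_int lo + t" using y by simp
    have "ef s t lo \<le> hi" using hi(2)[OF efR[OF lo(1)]] .
    then show "s * of_int lo + t \<le> (of_int hi :: rat)" using efv[OF lo(1)] by (metis of_int_le_iff)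
  qed
  have e2: "(of_int lo :: rat) = s * of_int hi + t"
  proof (rule antisym)
    obtain y where y: "y \<in> R" "of_int lo = s * of_int y + t" using pre[OF lo(1)] by blast
    have "s * of_int hi \<le> s * of_int y" using hi(2)[OF y(1)] s by (simp add: mult_left_mono_neg)
    then show "s * of_int hi + t \<le> (of_int lo :: rat)" using y by simp
    have "lo \<le> ef s t hi" using lo(2)[OF efR[OF hi(1)]] .
    then show "(of_int lo :: rat) \<le> s * of_int hi + t" using efv[OF hi(1)] by (metis of_int_le_iff)
  qed
  show ?thesis
  proof (cases "lo = hi")
    case True
    then have "R = {lo}" using lo hi by force
    then show ?thesis unfolding Sym_def by (intro CollectI exI[of _ "2 * lo"]) simp
  next
    case False
    have "(of_int hi - of_int lo :: rat) = s * (of_int lo - of_int hi)" using e1 e2 by (simp add: algebra_simps)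
    then have "(s + 1) * (of_int lo - of_int hi :: rat) = 0" by (simp add: algebra_simps)
    moreover have "(of_int lo - of_int hi :: rat) \<noteq> 0" using False by simp
    ultimately have s1: "s = -1" by (simp add: add_eq_0_iff)
    then have "t = of_int (lo + hi)" using e1 by (simp add: algebra_simps)
    then have "R = (\<lambda>i. (lo + hi) - i) ` R" using RR s1 by (simp add: refl_eq)
    then show ?thesis unfolding Sym_def by blast
  qed
qed

lemma HR_char:
  assumes R: "finite R" and g: "g \<in> Lbar (card R)" and g': "g' \<in> Lbar (card R)"
  shows "((R, g), (R, g')) \<in> PR \<longleftrightarrow> (g, g') \<in> (if R \<in> Sym then orbrel (card R) else CRel (card R))"
proof -
  let ?m = "card R"
  have PRe: "((R, g), (R, g')) \<in> PR \<longleftrightarrow> (\<exists>s t. ARp R R s t \<and> g' \<in> opset ?m s g)"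
    by (simp add: PR_def)
  show ?thesis
  proof (cases "R \<in> Sym")
    case True
    then obtain j where j: "R = (\<lambda>i. j - i) ` R" by (auto simp: Sym_def)
    have arn: "ARp R R (-1) (of_int j)"
      unfolding ARp_def using j by (simp add: intmap_int refl_eq[symmetric])
    have "(\<exists>s t. ARp R R s t \<and> g' \<in> opset ?m s g) \<longleftrightarrow> (\<exists>\<alpha>. g' = act ?m \<alpha> g)"
    proof
      assume "\<exists>s t. ARp R R s t \<and> g' \<in> opset ?m s g"
      then obtain s where "g' \<in> opset ?m s g" by blast
      then have "g' = act ?m S1 g \<or> g' = act ?m Sc g \<or> g' = act ?m Sr g \<or> g' = act ?m Src g"
        by (auto simp: opset_def split: if_splits)
      then show "\<exists>\<alpha>. g' = act ?m \<alpha> g" by blast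
    next
      assume "\<exists>\<alpha>. g' = act ?m \<alpha> g"
      then obtain \<alpha> where a: "g' = act ?m \<alpha> g" by blast
      show "\<exists>s t. ARp R R s t \<and> g' \<in> opset ?m s g"
      proof (cases \<alpha>)
        case S1 then show ?thesis using a ARp_refl by (intro exI[of _ 1] exI[of _ 0]) (simp add: opset_def)
      next
        case Sc then show ?thesis using a ARp_refl by (intro exI[of _ 1] exI[of _ 0]) (simp add: opset_def)
      next
        case Sr then show ?thesis using a arn by (intro exI[of _ "-1"] exI[of _ "of_int j"]) (simp add: opset_def)
      next
        case Src then show ?thesis using a arn by (intro exI[of _ "-1"] exI[of _ "of_int j"]) (simp add: opset_def)
      qed
    qed
    then show ?thesis using True PRe g g' by (simp add: orbrel_def)
  next
    case False
    have "(\<exists>s t. ARp R R s t \<and> g' \<in> opset ?m s g) \<longleftrightarrow> (g' = g \<or> g' = hc ?m g)"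
    proof
      assume "\<exists>s t. ARp R R s t \<and> g' \<in> opset ?m s g"
      then obtain s t where st: "ARp R R s t" "g' \<in> opset ?m s g" by blast
      have "s \<noteq> 0" using st by (simp add: ARp_def)
      moreover have "\<not> s < 0" using neg_sym[OF R st(1)] False by blast
      ultimately have "s > 0" by simp
      then show "g' = g \<or> g' = hc ?m g" using st(2) by (simp add: opset_def)
    next
      assume "g' = g \<or> g' = hc ?m g"
      then show "\<exists>s t. ARp R R s t \<and> g' \<in> opset ?m s g" using ARp_refl
        by (intro exI[of _ 1] exI[of _ 0]) (auto simp: opset_def)
    qed
    then show ?thesis using False PRe g g' by (simp add: CRel_def)
  qed
qed

lemma ssim_on_eq: "ssim_on N = {(M, M'). M \<subseteq> N \<and> M' \<subseteq> N \<and> (\<exists>s t. ARp M M' s t)}"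
  by (simp add: ssim_on_def ssim_char)

lemma equiv_ssim_on: "equiv (Pow N) (ssim_on N)"
proof (rule equivI)
  show "ssim_on N \<subseteq> Pow N \<times> Pow N" unfolding ssim_on_eq by blast
  show "refl_on (Pow N) (ssim_on N)"
  proof (rule refl_onI)
    fix M assume "M \<in> Pow N"
    then show "(M, M) \<in> ssim_on N" unfolding ssim_on_eq using ARp_refl by blast
  qed
  show "sym (ssim_on N)"
  proof (rule symI)
    fix a b assume "(a, b) \<in> ssim_on N"
    then obtain s t where "a \<subseteq> N" "b \<subseteq> N" "ARp a b s t" unfolding ssim_on_eq by blast
    then show "(b, a) \<in> ssim_on N" using ARp_sym unfolding ssim_on_eq by blast
  qed
  show "trans (ssim_on N)"
  proof (rule transI)
    fix a b c assume "(a, b) \<in> ssim_on N" "(b, c) \<in> ssim_on N"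
    then obtain s t s' t' where "a \<subseteq> N" "c \<subseteq> N" "ARp a b s t" "ARp b c s' t'"
      unfolding ssim_on_eq by blast
    then show "(a, c) \<in> ssim_on N" using ARp_trans unfolding ssim_on_eq by blast
  qed
qed

lemma rep_props:
  assumes C: "C \<in> Pow N // ssim_on N"
  shows "rep C \<in> C" "rep C \<subseteq> N" "C = ssim_on N `` {rep C}"
proof -
  from C obtain M where M: "C = ssim_on N `` {M}" "M \<in> Pow N" by (rule quotientE)
  have "M \<in> ssim_on N `` {M}" by (rule equiv_class_self[OF equiv_ssim_on M(2)])
  then have "M \<in> C" using M(1) by simp
  then show r: "rep C \<in> C" unfolding rep_def by (rule someI)
  then have mr: "(M, rep C) \<in> ssim_on N" using M(1) by simp
  then show "rep C \<subseteq> N" unfolding ssim_on_eq by blast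
  have "ssim_on N `` {M} = ssim_on N `` {rep C}" by (rule equiv_class_eq[OF equiv_ssim_on mr])
  then show "C = ssim_on N `` {rep C}" using M(1) by simp
qed

definition cls :: "int set \<Rightarrow> int set set \<Rightarrow> (int set \<times> rl) set set" where
  "cls N C = (\<lambda>g. PRP N `` {(rep C, g)}) ` Lbar (card (rep C))"

lemma card_cls:
  assumes N: "finite N" and C: "C \<in> Pow N // ssim_on N"
  shows "card (cls N C) = (if rep C \<in> Sym then card (Lbar (card (rep C)) // orbrel (card (rep C)))
     else card (Lbar (card (rep C)) // orbrel (card (rep C))) + card (tbar (card (rep C)) {S1})
        + card (tbar (card (rep C)) {S1, Sc}))"
proof -
  let ?R = "rep C"
  let ?m = "card ?R"
  let ?E = "if ?R \<in> Sym then orbrel ?m else CRel ?m"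
  have RN: "?R \<subseteq> N" using rep_props[OF C] by simp
  have Rf: "finite ?R" using RN N finite_subset by blast
  have eqE: "equiv (Lbar ?m) ?E" using equiv_orbrel equiv_CRel by simp
  have "card (cls N C) = card ((\<lambda>g. ?E `` {g}) ` Lbar ?m)"
    unfolding cls_def
  proof (rule card_same_kernel)
    fix g g' assume g: "g \<in> Lbar ?m" and g': "g' \<in> Lbar ?m"
    have p: "(?R, g) \<in> PS N" "(?R, g') \<in> PS N" using g g' RN by (auto simp: PS_def)
    have "PRP N `` {(?R, g)} = PRP N `` {(?R, g')} \<longleftrightarrow> ((?R, g), (?R, g')) \<in> PRP N"
      by (rule eq_equiv_class_iff[OF equiv_PRP p])
    also have "\<dots> \<longleftrightarrow> ((?R, g), (?R, g')) \<in> PR" using p by (simp add: PRP_def)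
    also have "\<dots> \<longleftrightarrow> (g, g') \<in> ?E" by (rule HR_char[OF Rf g g'])
    also have "\<dots> \<longleftrightarrow> ?E `` {g} = ?E `` {g'}" by (rule eq_equiv_class_iff[OF eqE g g', symmetric])
    finally show "PRP N `` {(?R, g)} = PRP N `` {(?R, g')} \<longleftrightarrow> ?E `` {g} = ?E `` {g'}" .
  qed
  also have "\<dots> = card (Lbar ?m // ?E)" by (simp add: quot_image)
  finally show ?thesis using count_c[of ?m] by simp
qed

lemma partition:
  assumes N: "finite N"
  shows "PS N // PRP N = (\<Union>C \<in> Pow N // ssim_on N. cls N C)"
proof
  show "PS N // PRP N \<subseteq> (\<Union>C \<in> Pow N // ssim_on N. cls N C)"
  proof
    fix X assume "X \<in> PS N // PRP N"
    then obtain p where p: "X = PRP N `` {p}" "p \<in> PS N" by (auto elim: quotientE)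
    obtain M g where pe: "p = (M, g)" by (cases p)
    have M: "M \<subseteq> N" "g \<in> Lbar (card M)" using p pe by (auto simp: PS_def)
    define C where "C = ssim_on N `` {M}"
    have C: "C \<in> Pow N // ssim_on N" using M by (auto simp: C_def intro: quotientI)
    have "rep C \<in> C" using rep_props[OF C] by simp
    then have "(M, rep C) \<in> ssim_on N" by (simp add: C_def)
    then obtain s t where ar: "ARp M (rep C) s t" by (auto simp: ssim_on_eq)
    have s0: "s \<noteq> 0" using ar by (simp add: ARp_def)
    define g'' where "g'' = (if s > 0 then g else hr (card M) g)"
    have go: "g'' \<in> opset (card M) s g" by (simp add: g''_def opset_def)
    have gL: "g'' \<in> Lbar (card (rep C))" using ARp_card[OF ar] M(2) hr_Lbar by (simp add: g''_def)
    have q: "(rep C, g'') \<in> PS N" using gL rep_props[OF C] by (simp add: PS_def)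
    have "(p, (rep C, g'')) \<in> PR" using ar go pe unfolding PR_def by auto
    then have "(p, (rep C, g'')) \<in> PRP N" using p q by (simp add: PRP_def)
    then have "X = PRP N `` {(rep C, g'')}" using p equiv_class_eq[OF equiv_PRP] by simp
    then have "X \<in> cls N C" using gL by (simp add: cls_def)
    then show "X \<in> (\<Union>C \<in> Pow N // ssim_on N. cls N C)" using C by blast
  qed
  show "(\<Union>C \<in> Pow N // ssim_on N. cls N C) \<subseteq> PS N // PRP N"
  proof
    fix X assume "X \<in> (\<Union>C \<in> Pow N // ssim_on N. cls N C)"
    then obtain C g where C: "C \<in> Pow N // ssim_on N" and g: "g \<in> Lbar (card (rep C))"
      and X: "X = PRP N `` {(rep C, g)}" by (auto simp: cls_def)
    have "(rep C, g) \<in> PS N" using g rep_props[OF C] by (simp add: PS_def)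
    then show "X \<in> PS N // PRP N" using X by (auto intro: quotientI)
  qed
qed

lemma cls_disj:
  assumes C1: "C1 \<in> Pow N // ssim_on N" and C2: "C2 \<in> Pow N // ssim_on N" and ne: "C1 \<noteq> C2"
  shows "cls N C1 \<inter> cls N C2 = {}"
proof (rule ccontr)
  assume "cls N C1 \<inter> cls N C2 \<noteq> {}"
  then obtain g1 g2 where g1: "g1 \<in> Lbar (card (rep C1))" and g2: "g2 \<in> Lbar (card (rep C2))"
    and e: "PRP N `` {(rep C1, g1)} = PRP N `` {(rep C2, g2)}" by (auto simp: cls_def)
  have p: "(rep C1, g1) \<in> PS N" "(rep C2, g2) \<in> PS N"
    using g1 g2 rep_props[OF C1] rep_props[OF C2] by (auto simp: PS_def)
  have "((rep C1, g1), (rep C2, g2)) \<in> PRP N" using e eq_equiv_class_iff[OF equiv_PRP p] by simp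
  then obtain s t where "ARp (rep C1) (rep C2) s t" by (auto simp: PRP_def PR_def)
  then have "(rep C1, rep C2) \<in> ssim_on N" using rep_props[OF C1] rep_props[OF C2] by (auto simp: ssim_on_eq)
  then have "ssim_on N `` {rep C1} = ssim_on N `` {rep C2}" using equiv_class_eq[OF equiv_ssim_on] by simp
  then show False using rep_props(3)[OF C1] rep_props(3)[OF C2] ne by simp
qed

lemma main_count:
  assumes N: "finite N"
  shows "card (G2 N // gsim_on N) =
    (\<Sum>C \<in> Pow N // ssim_on N. card (Lbar (card (rep C)) // orbrel (card (rep C))))
    + (\<Sum>C \<in> {C \<in> Pow N // ssim_on N. rep C \<notin> Sym}.
         card (tbar (card (rep C)) {S1}) + card (tbar (card (rep C)) {S1, Sc}))"
proof -
  let ?Q = "Pow N // ssim_on N"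
  let ?a = "\<lambda>C. card (Lbar (card (rep C)) // orbrel (card (rep C)))"
  let ?b = "\<lambda>C. card (tbar (card (rep C)) {S1}) + card (tbar (card (rep C)) {S1, Sc})"
  have rel: "{(p, q). p \<in> PS N \<and> q \<in> PS N \<and> (FF p, FF q) \<in> gsim_on N} = PRP N"
  proof -
    have "FF p \<in> G2 N" if "p \<in> PS N" for p using G2_bij[OF N] that by (auto simp: bij_betw_def)
    then show ?thesis using gsim_PR[OF N] by (auto simp: gsim_on_def PRP_def)
  qed
  have "card (G2 N // gsim_on N) = card (PS N // PRP N)"
    using card_quot_bij[OF G2_bij[OF N], of "gsim_on N"] rel by (auto simp: gsim_on_def)
  also have "\<dots> = card (\<Union>C \<in> ?Q. cls N C)" by (simp only: partition[OF N])
  also have "\<dots> = (\<Sum>C \<in> ?Q. card (cls N C))"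
  proof (rule card_UN_disjoint)
    show "finite ?Q" using finite_quotient[of "Pow N" "ssim_on N"] N by (auto simp: ssim_on_eq)
    show "\<forall>C\<in>?Q. finite (cls N C)" by (simp add: cls_def finite_Lbar)
    show "\<forall>C\<in>?Q. \<forall>C'\<in>?Q. C \<noteq> C' \<longrightarrow> cls N C \<inter> cls N C' = {}" using cls_disj by blast
  qed
  also have "\<dots> = (\<Sum>C \<in> ?Q. ?a C + (if rep C \<notin> Sym then ?b C else 0))"
    by (rule sum.cong[OF refl]) (simp add: card_cls[OF N])
  also have "\<dots> = (\<Sum>C \<in> ?Q. ?a C) + (\<Sum>C \<in> ?Q. (if rep C \<notin> Sym then ?b C else 0))"
    by (rule sum.distrib)
  also have "(\<Sum>C \<in> ?Q. (if rep C \<notin> Sym then ?b C else 0)) = (\<Sum>C \<in> {C \<in> ?Q. rep C \<notin> Sym}. ?b C)"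
  proof (rule sum.inter_filter[symmetric])
    show "finite ?Q" using finite_quotient[of "Pow N" "ssim_on N"] N by (auto simp: ssim_on_eq)
  qed
  finally show ?thesis .
qed

theorem proposition10:
  fixes n :: nat
  defines "N \<equiv> {1 .. int n}"
  shows "card (G2 N // gsim_on N) =
    (\<Sum>C \<in> Pow N // ssim_on N. card (Lbar (card (rep C)) // orbrel (card (rep C))))
    + (\<Sum>C \<in> {C \<in> Pow N // ssim_on N. rep C \<notin> Sym}.
         card (tbar (card (rep C)) {S1}) + card (tbar (card (rep C)) {S1, Sc}))"
  unfolding N_def by (rule main_count) simp

end
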